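(* Let $k\ge 5$ and let $G=(V,E)$ be the cycle graph of the cycle $C=(v_0,\ldots,v_{k-1})$, i.e. $V=V(C)$ and $E=\textnormal{ext}(C)$. Then the inequality $$\sum_{f\in\{\{v_i,v_j\}\in E^c:\ d_C(v_i,v_j)=2\}}x_f\ \ge\ 2$$ is valid and facet-defining for $\textnormal{conv}(X(G))$.
   Context: $\textnormal{ext}(C)=\{\{v_{i-1},v_i\}\}_{i=1}^{k-1}\cup\{\{v_{k-1},v_0\}\}$, $E^c=\binom{V}{2}\setminus E$. For $i<j$, $d_C(v_i,v_j)=\min\{j-i,\,k-j+i\}$, and $d_C(v_j,v_i)=d_C(v_i,v_j)$. For $x\in\{0,1\}^{E^c}$, $E(x)=\{f:x_f=1\}$ and $X(G)=\{x\in\{0,1\}^{E^c}:(V,E\cup E(x))\text{ is chordal}\}$; a graph is chordal if every cycle with at least four vertices has a chord. *)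

theory Defs
  imports Complex_Main
begin

text \<open>Graphs: vertex set V, edge set F given as a set of 2-element vertex sets.\<close>

definition is_graph_cycle :: "'a set \<Rightarrow> 'a set set \<Rightarrow> 'a list \<Rightarrow> bool" where
  "is_graph_cycle V F cs \<longleftrightarrow> distinct cs \<and> set cs \<subseteq> V \<and> length cs \<ge> 3 \<and>
     (\<forall>i < length cs. {cs ! i, cs ! ((i + 1) mod length cs)} \<in> F)"

definition has_chord :: "'a set set \<Rightarrow> 'a list \<Rightarrow> bool" where
  "has_chord F cs \<longleftrightarrow> (\<exists>i < length cs. \<exists>j < length cs. i \<noteq> j \<and>
     j \<noteq> (i + 1) mod length cs \<and> i \<noteq> (j + 1) mod length cs \<and> {cs ! i, cs ! j} \<in> F)"

definition chordal :: "'a set \<Rightarrow> 'a set set \<Rightarrow> bool" where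
  "chordal V F \<longleftrightarrow> (\<forall>cs. is_graph_cycle V F cs \<and> length cs \<ge> 4 \<longrightarrow> has_chord F cs)"

text \<open>The cycle C = (v_0,...,v_{k-1}) with v_i = i.\<close>

definition cyc_V :: "nat \<Rightarrow> nat set" where
  "cyc_V k = {0..<k}"

definition cyc_E :: "nat \<Rightarrow> nat set set" where
  "cyc_E k = {{i - 1, i} | i. 1 \<le> i \<and> i \<le> k - 1} \<union> {{k - 1, 0}}"

definition nonedges :: "nat set \<Rightarrow> nat set set \<Rightarrow> nat set set" where
  "nonedges V F = {{u, v} | u v. u \<in> V \<and> v \<in> V \<and> u \<noteq> v} - F"

definition dC :: "nat \<Rightarrow> nat \<Rightarrow> nat \<Rightarrow> nat" where
  "dC k i j = (if i < j then min (j - i) (k - j + i) else min (i - j) (k - i + j))"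

text \<open>Points of R^{E^c} are represented as functions on 2-sets vanishing outside E^c.\<close>

definition X_set :: "nat set \<Rightarrow> nat set set \<Rightarrow> (nat set \<Rightarrow> real) set" where
  "X_set V F = {x. (\<forall>f \<in> nonedges V F. x f \<in> {0, 1}) \<and> (\<forall>f. f \<notin> nonedges V F \<longrightarrow> x f = 0)
      \<and> chordal V (F \<union> {f \<in> nonedges V F. x f = 1})}"

definition conv :: "('e \<Rightarrow> real) set \<Rightarrow> ('e \<Rightarrow> real) set" where
  "conv S = {y. \<exists>T c. finite T \<and> T \<subseteq> S \<and> T \<noteq> {} \<and> (\<forall>x\<in>T. c x \<ge> 0) \<and> sum c T = 1
                 \<and> y = (\<lambda>f. \<Sum>x\<in>T. c x * x f)}"

definition aff_indep :: "('e \<Rightarrow> real) set \<Rightarrow> bool" where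
  "aff_indep T \<longleftrightarrow> finite T \<and> (\<forall>c. sum c T = 0 \<and> (\<forall>f. (\<Sum>x\<in>T. c x * x f) = 0) \<longrightarrow> (\<forall>x\<in>T. c x = 0))"

definition adim :: "('e \<Rightarrow> real) set \<Rightarrow> int" where
  "adim S = int (GREATEST n. \<exists>T \<subseteq> S. aff_indep T \<and> card T = n) - 1"

end

theory Submission
  imports Defs
begin



lemma nullspace:
  fixes v :: "'i \<Rightarrow> 'e \<Rightarrow> real"
  assumes "finite E" "finite I" "card E < card I"
  shows "\<exists>c. (\<exists>i\<in>I. c i \<noteq> 0) \<and> (\<forall>e\<in>E. (\<Sum>i\<in>I. c i * v i e) = 0)"
  using assms
proof (induction E arbitrary: I v rule: finite_induct)
  case empty
  then obtain i where i: "i \<in> I" by fastforce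
  show ?case by (rule exI[of _ "\<lambda>j. if j = i then 1 else 0"]) (use i in auto)
next
  case (insert g E)
  have cE: "card E < card I" using insert by simp
  show ?case
  proof (cases "\<forall>i\<in>I. v i g = 0")
    case True
    from insert.IH[OF insert.prems(1) cE, of v] obtain c where
      c: "\<exists>i\<in>I. c i \<noteq> 0" "\<forall>e\<in>E. (\<Sum>i\<in>I. c i * v i e) = 0" by blast
    show ?thesis using c True by (intro exI[of _ c]) auto
  next
    case False
    then obtain i0 where i0: "i0 \<in> I" "v i0 g \<noteq> 0" by blast
    define w where "w i e = v i e - (v i g / v i0 g) * v i0 e" for i e
    define I' where "I' = I - {i0}"
    have fI': "finite I'" using insert by (simp add: I'_def)
    have cI': "card E < card I'" using insert i0 by (simp add: I'_def)
    from insert.IH[OF fI' cI', of w] obtain c' where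
      c': "\<exists>i\<in>I'. c' i \<noteq> 0" "\<forall>e\<in>E. (\<Sum>i\<in>I'. c' i * w i e) = 0" by blast
    define c where "c i = (if i = i0 then - (\<Sum>j\<in>I'. c' j * v j g) / v i0 g else c' i)" for i
    have I: "I = insert i0 I'" using i0 by (auto simp: I'_def)
    have i0I': "i0 \<notin> I'" by (simp add: I'_def)
    have key: "(\<Sum>i\<in>I. c i * v i e) = (\<Sum>i\<in>I'. c' i * w i e)" for e
    proof -
      have "(\<Sum>i\<in>I. c i * v i e) = c i0 * v i0 e + (\<Sum>i\<in>I'. c i * v i e)"
        using I i0I' fI' by simp
      also have "(\<Sum>i\<in>I'. c i * v i e) = (\<Sum>i\<in>I'. c' i * v i e)"
        by (rule sum.cong) (auto simp: c_def i0I')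
      also have "(\<Sum>i\<in>I'. c' i * w i e) = (\<Sum>i\<in>I'. c' i * v i e) - (\<Sum>i\<in>I'. c' i * v i g) / v i0 g * v i0 e"
        by (simp add: w_def algebra_simps sum_subtractf sum_distrib_left sum_divide_distrib sum_distrib_right)
      ultimately show ?thesis by (simp add: c_def algebra_simps)
    qed
    show ?thesis
    proof (intro exI[of _ c] conjI)
      show "\<exists>i\<in>I. c i \<noteq> 0" using c' i0I' by (auto simp: c_def I)
      show "\<forall>e\<in>insert g E. (\<Sum>i\<in>I. c i * v i e) = 0"
        using c' i0 by (auto simp: key w_def)
    qed
  qed
qed


lemma card_opt: "finite N \<Longrightarrow> card (insert None (Some ` N)) = card N + 1"
  by (simp add: card_image image_iff)

lemma sum_opt: "finite N \<Longrightarrow> (\<Sum>i\<in>insert None (Some ` N). h i) = h None + (\<Sum>f\<in>N. h (Some f))"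
  by (simp add: image_iff sum.reindex)

lemma aff_bound:
  fixes T :: "('e \<Rightarrow> real) set"
  assumes fN: "finite N" and van: "\<forall>y\<in>T. \<forall>f. f \<notin> N \<longrightarrow> y f = 0" and ai: "aff_indep T"
  shows "card T \<le> card N + 1"
proof (rule ccontr)
  assume "\<not> ?thesis"
  hence lt: "card (insert None (Some ` N)) < card T" using fN by (simp add: card_image)
  have fT: "finite T" using ai by (simp add: aff_indep_def)
  define v where "v y i = (case i of None \<Rightarrow> 1 | Some f \<Rightarrow> y f)" for y :: "'e \<Rightarrow> real" and i
  obtain c where c: "\<exists>y\<in>T. c y \<noteq> 0" "\<forall>e\<in>insert None (Some ` N). (\<Sum>y\<in>T. c y * v y e) = 0"
    using nullspace[OF _ fT lt, of v] fN by blast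
  have "sum c T = 0" using c(2) by (auto simp: v_def)
  moreover have "\<forall>f. (\<Sum>y\<in>T. c y * y f) = 0"
  proof
    fix f show "(\<Sum>y\<in>T. c y * y f) = 0"
    proof (cases "f \<in> N")
      case True thus ?thesis using c(2) by (auto simp: v_def)
    next
      case False thus ?thesis using van by (simp add: sum.neutral)
    qed
  qed
  ultimately have "\<forall>y\<in>T. c y = 0" using ai by (auto simp: aff_indep_def)
  thus False using c(1) by blast
qed

lemma aff_bound2:
  fixes T :: "('e \<Rightarrow> real) set"
  assumes fN: "finite N" and van: "\<forall>y\<in>T. \<forall>f. f \<notin> N \<longrightarrow> y f = 0" and ai: "aff_indep T"
    and fD: "finite D" and DN: "D \<subseteq> N" and g0: "g0 \<in> D" and sD: "\<forall>y\<in>T. (\<Sum>f\<in>D. y f) = 2"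
  shows "card T \<le> card N"
proof (rule ccontr)
  assume nt: "\<not> ?thesis"
  have g0N: "g0 \<in> N" using g0 DN by auto
  have "card (insert None (Some ` (N - {g0}))) = card N"
    using fN g0N card_gt_0_iff[of N] by (auto simp: card_image)
  hence lt: "card (insert None (Some ` (N - {g0}))) < card T" using nt by simp
  have fT: "finite T" using ai by (simp add: aff_indep_def)
  define v where "v y i = (case i of None \<Rightarrow> 1 | Some f \<Rightarrow> y f)" for y :: "'e \<Rightarrow> real" and i
  obtain c where c: "\<exists>y\<in>T. c y \<noteq> 0" "\<forall>e\<in>insert None (Some ` (N - {g0})). (\<Sum>y\<in>T. c y * v y e) = 0"
    using nullspace[OF _ fT lt, of v] fN by blast
  have s0: "sum c T = 0" using c(2) by (auto simp: v_def)
  have sN: "(\<Sum>y\<in>T. c y * y f) = 0" if "f \<in> N" "f \<noteq> g0" for f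
    using c(2) that by (auto simp: v_def)
  have yg0: "y g0 = 2 - (\<Sum>f\<in>D - {g0}. y f)" if "y \<in> T" for y
    using sD that g0 fD by (simp add: sum.remove eq_diff_eq)
  have "(\<Sum>y\<in>T. c y * y g0) = (\<Sum>y\<in>T. 2 * c y - (\<Sum>f\<in>D - {g0}. c y * y f))"
    by (rule sum.cong) (auto simp: yg0 algebra_simps sum_distrib_left)
  also have "\<dots> = 2 * sum c T - (\<Sum>f\<in>D - {g0}. \<Sum>y\<in>T. c y * y f)"
    by (simp add: sum_subtractf sum_distrib_left sum.swap[of _ T])
  also have "\<dots> = 0"
  proof -
    have "(\<Sum>f\<in>D - {g0}. \<Sum>y\<in>T. c y * y f) = 0"
      by (rule sum.neutral) (use sN DN in auto)
    thus ?thesis using s0 by simp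
  qed
  finally have z0: "(\<Sum>y\<in>T. c y * y g0) = 0" .
  have "\<forall>f. (\<Sum>y\<in>T. c y * y f) = 0"
  proof
    fix f show "(\<Sum>y\<in>T. c y * y f) = 0"
    proof (cases "f \<in> N")
      case True thus ?thesis using sN z0 by (cases "f = g0") auto
    next
      case False thus ?thesis using van by (simp add: sum.neutral)
    qed
  qed
  hence "\<forall>y\<in>T. c y = 0" using ai s0 by (auto simp: aff_indep_def)
  thus False using c(1) by blast
qed


definition in_aff :: "('e \<Rightarrow> real) \<Rightarrow> ('e \<Rightarrow> real) set \<Rightarrow> bool" where
  "in_aff x T \<longleftrightarrow> (\<exists>d. sum d T = 1 \<and> (\<forall>f. x f = (\<Sum>y\<in>T. d y * y f)))"

lemma aff_insert:
  assumes ai: "aff_indep T" and xT: "x \<notin> T" and na: "\<not> in_aff x T"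
  shows "aff_indep (insert x T)"
  unfolding aff_indep_def
proof (intro conjI allI impI)
  have fT: "finite T" using ai by (simp add: aff_indep_def)
  thus "finite (insert x T)" by simp
  fix c assume h: "sum c (insert x T) = 0 \<and> (\<forall>f. (\<Sum>y\<in>insert x T. c y * y f) = 0)"
  have h1: "c x + sum c T = 0" using h fT xT by simp
  have h2: "c x * x f + (\<Sum>y\<in>T. c y * y f) = 0" for f using h fT xT by simp
  have cx: "c x = 0"
  proof (rule ccontr)
    assume cx: "c x \<noteq> 0"
    define d where "d y = - c y / c x" for y
    have "sum d T = - sum c T / c x" by (simp add: d_def sum_negf sum_divide_distrib)
    moreover have "- sum c T = c x" using h1 by simp
    ultimately have "sum d T = 1" using cx by simp
    moreover have "\<forall>f. x f = (\<Sum>y\<in>T. d y * y f)"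
    proof
      fix f
      have "(\<Sum>y\<in>T. d y * y f) = (\<Sum>y\<in>T. - (c y * y f)) / c x"
        by (simp add: d_def sum_divide_distrib)
      also have "\<dots> = - (\<Sum>y\<in>T. c y * y f) / c x" by (simp add: sum_negf)
      also have "\<dots> = x f" using h2[of f] cx by (simp add: field_simps)
      finally show "x f = (\<Sum>y\<in>T. d y * y f)" by simp
    qed
    ultimately show False using na by (auto simp: in_aff_def)
  qed
  have "sum c T = 0 \<and> (\<forall>f. (\<Sum>y\<in>T. c y * y f) = 0)" using h1 h2 cx by simp
  hence "\<forall>y\<in>T. c y = 0" using ai by (simp add: aff_indep_def)
  thus "\<forall>y\<in>insert x T. c y = 0" using cx by simp
qed

lemma aff_lower:
  fixes S :: "('e \<Rightarrow> real) set"
  assumes fN: "finite N" and fZ: "finite Z" and ZN: "Z \<subseteq> N"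
    and van: "\<forall>y\<in>S. \<forall>f. f \<notin> N \<longrightarrow> y f = 0"
    and H: "\<And>a b. (\<forall>x\<in>S. (\<Sum>f\<in>N. a f * x f) = b) \<Longrightarrow> (\<forall>f\<in>Z. a f = 0) \<Longrightarrow> (\<forall>f\<in>N. a f = 0) \<and> b = 0"
  shows "\<exists>T\<subseteq>S. aff_indep T \<and> card N + 1 \<le> card T + card Z"
proof -
  define M where "M = {n. \<exists>T\<subseteq>S. aff_indep T \<and> card T = n}"
  have Mb: "M \<subseteq> {..card N + 1}"
    using aff_bound[OF fN] van by (auto simp: M_def)
  have fM: "finite M" using Mb finite_subset by blast
  have "0 \<in> M" unfolding M_def by (intro CollectI exI[of _ "{}"]) (simp add: aff_indep_def)
  hence "Max M \<in> M" using fM by (intro Max_in) auto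
  then obtain T0 where T0: "T0 \<subseteq> S" "aff_indep T0" "card T0 = Max M" by (auto simp: M_def)
  have fT0: "finite T0" using T0 by (simp add: aff_indep_def)
  have span: "in_aff x T0" if "x \<in> S" for x
  proof (rule ccontr)
    assume na: "\<not> in_aff x T0"
    have "x \<notin> T0"
    proof
      assume "x \<in> T0"
      hence "in_aff x T0" unfolding in_aff_def using fT0
      proof (intro exI[of _ "\<lambda>y. if y = x then 1 else 0"] conjI allI)
        show "(\<Sum>y\<in>T0. if y = x then 1 else 0) = (1::real)" using \<open>x \<in> T0\<close> fT0 by simp
        fix f
        have "(\<Sum>y\<in>T0. (if y = x then 1 else 0) * y f) = (\<Sum>y\<in>T0. if y = x then y f else 0)"
          by (rule sum.cong) auto
        thus "x f = (\<Sum>y\<in>T0. (if y = x then 1 else 0) * y f)" using \<open>x \<in> T0\<close> fT0 by simp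
      qed
      thus False using na by simp
    qed
    hence "aff_indep (insert x T0)" "card (insert x T0) = Max M + 1"
      using aff_insert[OF T0(2) _ na] T0 fT0 by auto
    hence "Max M + 1 \<in> M" using T0 that unfolding M_def by blast
    hence "Max M + 1 \<le> Max M" using fM by (simp add: Max_ge)
    thus False by simp
  qed
  show ?thesis
  proof (rule ccontr)
    assume nt: "\<not> ?thesis"
    hence lt0: "card T0 + card Z < card N + 1" using T0 by fastforce
    define Ei where "Ei = Inl ` T0 \<union> Inr ` Z"
    have cEi: "card Ei = card T0 + card Z"
      unfolding Ei_def using fT0 fZ by (subst card_Un_disjoint) (auto simp: card_image)
    have fEi: "finite Ei" using fT0 fZ by (simp add: Ei_def)
    have lt: "card Ei < card (insert None (Some ` N))" using lt0 cEi fN by (simp add: card_image)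
    define v where "v i e = (case e of Inl y \<Rightarrow> (case i of None \<Rightarrow> -1 | Some f \<Rightarrow> y f)
        | Inr g \<Rightarrow> (case i of None \<Rightarrow> 0 | Some f \<Rightarrow> if f = g then 1 else 0))"
      for i :: "'e option" and e :: "('e \<Rightarrow> real) + 'e"
    obtain c where c: "\<exists>i\<in>insert None (Some ` N). c i \<noteq> 0"
      "\<forall>e\<in>Ei. (\<Sum>i\<in>insert None (Some ` N). c i * v i e) = 0"
      using nullspace[OF fEi _ lt, of v] fN by blast
    define a where "a f = c (Some f)" for f
    define b where "b = c None"
    have eqT: "(\<Sum>f\<in>N. a f * y f) = b" if "y \<in> T0" for y
    proof -
      have "0 = (\<Sum>i\<in>insert None (Some ` N). c i * v i (Inl y))" using c(2) that by (auto simp: Ei_def)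
      also have "\<dots> = - b + (\<Sum>f\<in>N. a f * y f)" by (subst sum_opt[OF fN]) (simp add: v_def a_def b_def)
      finally show ?thesis by simp
    qed
    have eqZ: "a g = 0" if "g \<in> Z" for g
    proof -
      have "g \<in> N" using that ZN by auto
      have "0 = (\<Sum>i\<in>insert None (Some ` N). c i * v i (Inr g))" using c(2) that by (auto simp: Ei_def)
      also have "\<dots> = (\<Sum>f\<in>N. a f * (if f = g then 1 else 0))" by (subst sum_opt[OF fN]) (simp add: v_def a_def)
      also have "\<dots> = a g" using \<open>g \<in> N\<close> fN by (simp add: if_distrib sum.delta cong: if_cong)
      finally show ?thesis by simp
    qed
    have eqS: "\<forall>x\<in>S. (\<Sum>f\<in>N. a f * x f) = b"
    proof
      fix x assume "x \<in> S"
      then obtain d where d: "sum d T0 = 1" "\<forall>f. x f = (\<Sum>y\<in>T0. d y * y f)" using span by (auto simp: in_aff_def)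
      have "(\<Sum>f\<in>N. a f * x f) = (\<Sum>f\<in>N. \<Sum>y\<in>T0. d y * (a f * y f))"
        using d(2) by (simp add: sum_distrib_left algebra_simps)
      also have "\<dots> = (\<Sum>y\<in>T0. d y * (\<Sum>f\<in>N. a f * y f))"
        by (subst sum.swap) (simp add: sum_distrib_left)
      also have "\<dots> = (\<Sum>y\<in>T0. d y * b)" using eqT by simp
      also have "\<dots> = b" using d(1) by (simp add: sum_distrib_right[symmetric])
      finally show "(\<Sum>f\<in>N. a f * x f) = b" .
    qed
    from H[OF eqS] eqZ have "(\<forall>f\<in>N. a f = 0) \<and> b = 0" by blast
    thus False using c(1) by (auto simp: a_def b_def)
  qed
qed



lemma memF:
  assumes "{a, b} \<in> {{u, v} | u v. u \<in> V \<and> v \<in> V \<and> R u v}" "\<And>u v. R u v \<Longrightarrow> R v u"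
  shows "R a b"
proof -
  obtain u v where "{a, b} = {u, v}" "R u v" using assms(1) by blast
  thus ?thesis using assms(2) by (auto simp: doubleton_eq_iff)
qed

lemma peo_chordal:
  fixes \<sigma> :: "'a \<Rightarrow> nat"
  assumes symR: "\<And>u v. R u v \<Longrightarrow> R v u"
    and inj: "inj_on \<sigma> V"
    and simpl: "\<And>v u1 u2. v \<in> V \<Longrightarrow> u1 \<in> V \<Longrightarrow> u2 \<in> V \<Longrightarrow> u1 \<noteq> u2 \<Longrightarrow> R v u1 \<Longrightarrow> R v u2
       \<Longrightarrow> \<sigma> u1 < \<sigma> v \<Longrightarrow> \<sigma> u2 < \<sigma> v \<Longrightarrow> R u1 u2"
  shows "chordal V {{u, v} | u v. u \<in> V \<and> v \<in> V \<and> R u v}"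
  unfolding chordal_def
proof (intro allI impI, elim conjE)
  fix cs assume cyc: "is_graph_cycle V {{u, v} | u v. u \<in> V \<and> v \<in> V \<and> R u v} cs" and L4: "4 \<le> length cs"
  define L where "L = length cs"
  have dist: "distinct cs" and sub: "set cs \<subseteq> V"
    using cyc unfolding is_graph_cycle_def L_def by auto
  have ed: "R (cs ! i) (cs ! ((i + 1) mod L))" if "i < L" for i
  proof -
    have "{cs ! i, cs ! ((i + 1) mod L)} \<in> {{u, v} | u v. u \<in> V \<and> v \<in> V \<and> R u v}"
      using cyc that unfolding is_graph_cycle_def L_def by blast
    thus ?thesis by (rule memF) (rule symR)
  qed
  have ne: "set cs \<noteq> {}" using L4 by auto
  have "Max (\<sigma> ` set cs) \<in> \<sigma> ` set cs" using ne by (intro Max_in) auto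
  then obtain i where i: "i < L" "\<sigma> (cs ! i) = Max (\<sigma> ` set cs)"
    by (auto simp: in_set_conv_nth L_def)
  define p where "p = (if i = 0 then L - 1 else i - 1)"
  define n where "n = (if i = L - 1 then 0 else i + 1)"
  have pL: "p < L" "n < L" using i L4 by (auto simp: p_def n_def L_def)
  have p1: "(p + 1) mod L = i" using i L4 by (auto simp: p_def L_def)
  have n1: "(i + 1) mod L = n"
  proof (cases "i = L - 1")
    case True
    hence "i + 1 = L" using i by simp
    thus ?thesis using True by (simp add: n_def)
  next
    case False thus ?thesis using i by (simp add: n_def)
  qed
  have pi: "p \<noteq> i" "n \<noteq> i" "p \<noteq> n" using i L4 by (auto simp: p_def n_def L_def)
  have n2: "p \<noteq> (n + 1) mod L"
  proof -
    consider "i = L - 1" | "i = 0" | "i \<noteq> L - 1" "i \<noteq> 0" "i + 2 = L" | "i \<noteq> L - 1" "i \<noteq> 0" "i + 2 < L"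
      using i by linarith
    thus ?thesis
    proof cases
      case 1 thus ?thesis using L4 by (simp add: p_def n_def L_def)
    next
      case 2 thus ?thesis using L4 by (simp add: p_def n_def L_def)
    next
      case 3 
      hence "n + 1 = L" by (simp add: n_def)
      thus ?thesis using 3 L4 by (simp add: p_def L_def)
    next
      case 4 thus ?thesis using L4 by (simp add: p_def n_def L_def)
    qed
  qed
  have "R (cs ! p) (cs ! i)" using ed[OF pL(1)] p1 by simp
  hence Rp: "R (cs ! i) (cs ! p)" by (rule symR)
  have Rn: "R (cs ! i) (cs ! n)" using ed[OF i(1)] n1 by auto
  have di: "cs ! p \<noteq> cs ! i" "cs ! n \<noteq> cs ! i" "cs ! p \<noteq> cs ! n"
    using pi pL i dist by (auto simp: nth_eq_iff_index_eq L_def)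
  have inV: "cs ! p \<in> V" "cs ! n \<in> V" "cs ! i \<in> V" using pL i sub by (auto simp: L_def)
  have "\<sigma> (cs ! p) \<le> \<sigma> (cs ! i)" "\<sigma> (cs ! n) \<le> \<sigma> (cs ! i)"
    using i pL by (auto simp: L_def)
  moreover have "\<sigma> (cs ! p) \<noteq> \<sigma> (cs ! i)" "\<sigma> (cs ! n) \<noteq> \<sigma> (cs ! i)"
    using di inV inj by (auto dest: inj_onD)
  ultimately have lt: "\<sigma> (cs ! p) < \<sigma> (cs ! i)" "\<sigma> (cs ! n) < \<sigma> (cs ! i)" by auto
  have "R (cs ! p) (cs ! n)" using simpl[OF inV(3) inV(1) inV(2) di(3) Rp Rn lt] .
  hence "{cs ! p, cs ! n} \<in> {{u, v} | u v. u \<in> V \<and> v \<in> V \<and> R u v}" using inV by blast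
  thus "has_chord {{u, v} | u v. u \<in> V \<and> v \<in> V \<and> R u v} cs"
    unfolding has_chord_def using pL pi n2 p1 n1 by (auto simp: L_def)
qed

lemma chordal_iso:
  assumes ch: "chordal V F" and inj: "inj_on \<phi> V" and sub: "\<forall>e\<in>F. e \<subseteq> V"
  shows "chordal (\<phi> ` V) ((`) \<phi> ` F)"
  unfolding chordal_def
proof (intro allI impI, elim conjE)
  fix cs' assume cyc: "is_graph_cycle (\<phi> ` V) ((`) \<phi> ` F) cs'" and L4: "4 \<le> length cs'"
  define \<psi> where "\<psi> = inv_into V \<phi>"
  define cs where "cs = map \<psi> cs'"
  have sub': "set cs' \<subseteq> \<phi> ` V" and d': "distinct cs'" using cyc by (auto simp: is_graph_cycle_def)
  have psiV: "\<psi> x \<in> V" if "x \<in> \<phi> ` V" for x using that by (simp add: \<psi>_def inv_into_into)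
  have bk: "\<psi> ` (\<phi> ` e) = e" if "e \<subseteq> V" for e using that inj by (simp add: \<psi>_def inv_into_image_cancel)
  have injpsi: "inj_on \<psi> (\<phi> ` V)" by (simp add: \<psi>_def inj_on_inv_into)
  have len: "length cs = length cs'" by (simp add: cs_def)
  have nth: "cs ! i = \<psi> (cs' ! i)" if "i < length cs'" for i using that by (simp add: cs_def)
  have edge: "{cs ! i, cs ! j} \<in> F" if ilt: "i < length cs'" and jlt: "j < length cs'" and ij: "{cs' ! i, cs' ! j} \<in> (`) \<phi> ` F" for i j
  proof -
    obtain e where e: "e \<in> F" "{cs' ! i, cs' ! j} = \<phi> ` e" using ij by auto
    have "{cs ! i, cs ! j} = \<psi> ` {cs' ! i, cs' ! j}" using ilt jlt by (simp add: nth)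
    also have "\<dots> = e" using e bk sub by auto
    finally show ?thesis using e by simp
  qed
  have "is_graph_cycle V F cs"
    unfolding is_graph_cycle_def
  proof (intro conjI allI impI)
    show "distinct cs" using d' injpsi sub' by (simp add: cs_def distinct_map inj_on_subset)
    show "set cs \<subseteq> V" using sub' psiV by (auto simp: cs_def)
    show "3 \<le> length cs" using L4 len by simp
    fix i assume "i < length cs"
    thus "{cs ! i, cs ! ((i + 1) mod length cs)} \<in> F"
      using cyc len L4 by (intro edge) (auto simp: is_graph_cycle_def intro: mod_less_divisor)
  qed
  hence "has_chord F cs" using ch L4 len by (auto simp: chordal_def)
  then obtain i j where ij: "i < length cs" "j < length cs" "i \<noteq> j" "j \<noteq> (i + 1) mod length cs"
    "i \<noteq> (j + 1) mod length cs" "{cs ! i, cs ! j} \<in> F" by (auto simp: has_chord_def)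
  have "\<phi> ` {cs ! i, cs ! j} = {cs' ! i, cs' ! j}"
  proof -
    have "cs' ! i \<in> \<phi> ` V" "cs' ! j \<in> \<phi> ` V" using ij len sub' by auto
    hence "\<phi> (\<psi> (cs' ! i)) = cs' ! i" "\<phi> (\<psi> (cs' ! j)) = cs' ! j" by (simp_all add: \<psi>_def f_inv_into_f)
    thus ?thesis using ij len by (simp add: nth)
  qed
  hence "{cs' ! i, cs' ! j} \<in> (`) \<phi> ` F" using ij(6) by (metis image_eqI)
  thus "has_chord ((`) \<phi> ` F) cs'" using ij len unfolding has_chord_def by auto
qed



definition ca :: "nat \<Rightarrow> nat \<Rightarrow> nat \<Rightarrow> bool" where
  "ca k u v \<longleftrightarrow> v = u + 1 \<or> u = v + 1 \<or> (u = 0 \<and> v = k - 1) \<or> (v = 0 \<and> u = k - 1)"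

lemma dC_sym: "dC k i j = dC k j i"
  by (auto simp: dC_def)

lemma dC_0: "i < k \<Longrightarrow> j < k \<Longrightarrow> dC k i j = 0 \<longleftrightarrow> i = j"
  by (auto simp: dC_def min_def)

lemma dC_1: "3 \<le> k \<Longrightarrow> i < k \<Longrightarrow> j < k \<Longrightarrow> dC k i j = 1 \<longleftrightarrow> ca k i j"
  unfolding dC_def ca_def min_def by (cases "i < j"; cases "j - i \<le> k - j + i"; cases "i - j \<le> k - i + j"; simp; linarith)

definition rot :: "nat \<Rightarrow> nat \<Rightarrow> nat \<Rightarrow> nat" where
  "rot k s t = (t + s) mod k"

lemma rot_lt: "0 < k \<Longrightarrow> rot k s t < k" by (simp add: rot_def)

lemma rot_eq: "i < k \<Longrightarrow> rot k s i = (if i + s mod k < k then i + s mod k else i + s mod k - k)"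
proof -
  assume i: "i < k"
  have r: "rot k s i = (i + s mod k) mod k" unfolding rot_def by (rule mod_add_right_eq[symmetric])
  have sk: "s mod k < k" using i by simp
  show ?thesis
  proof (cases "i + s mod k < k")
    case True thus ?thesis using r by simp
  next
    case False
    hence "i + s mod k = (i + s mod k - k) + k" by simp
    hence "(i + s mod k) mod k = (i + s mod k - k) mod k" by (metis mod_add_self2)
    also have "\<dots> = i + s mod k - k" using i sk by (intro mod_less) linarith
    finally show ?thesis using r False by simp
  qed
qed

lemma dC_rot: "i < k \<Longrightarrow> j < k \<Longrightarrow> dC k (rot k s i) (rot k s j) = dC k i j"
proof -
  assume i: "i < k" and j: "j < k"
  have "s mod k < k" using i by simp
  define s' where "s' = s mod k"
  have s': "s' < k" using \<open>s mod k < k\<close> by (simp add: s'_def)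
  have ri: "rot k s i = (if i + s' < k then i + s' else i + s' - k)" using rot_eq[OF i] by (simp add: s'_def)
  have rj: "rot k s j = (if j + s' < k then j + s' else j + s' - k)" using rot_eq[OF j] by (simp add: s'_def)
  show ?thesis unfolding ri rj dC_def min_def using i j s'
    by (cases "i + s' < k"; cases "j + s' < k"; cases "i < j"; simp split: if_split; linarith?)
qed

definition unrot :: "nat \<Rightarrow> nat \<Rightarrow> nat \<Rightarrow> nat" where
  "unrot k s u = rot k (k - s mod k) u"

lemma rot_unrot: "u < k \<Longrightarrow> rot k s (unrot k s u) = u"
proof -
  assume u: "u < k"
  have sm: "s mod k < k" using u by simp
  have "rot k s (unrot k s u) = (u + (k - s mod k) + s) mod k"
    by (simp add: rot_def unrot_def mod_add_left_eq)
  also have "u + (k - s mod k) + s = u + k + k * (s div k)"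
    using sm mod_mult_div_eq[of s k] by linarith
  also have "\<dots> mod k = u" using u by simp
  finally show ?thesis .
qed

lemma unrot_rot: "t < k \<Longrightarrow> unrot k s (rot k s t) = t"
proof -
  assume t: "t < k"
  have sm: "s mod k < k" using t by simp
  have "unrot k s (rot k s t) = (t + s + (k - s mod k)) mod k"
    by (simp add: rot_def unrot_def mod_add_left_eq)
  also have "t + s + (k - s mod k) = t + k + k * (s div k)"
    using sm mod_mult_div_eq[of s k] by linarith
  also have "\<dots> mod k = t" using t by simp
  finally show ?thesis .
qed

lemma unrot_lt: "0 < k \<Longrightarrow> unrot k s u < k" by (simp add: unrot_def rot_lt)

lemma dC_unrot: "i < k \<Longrightarrow> j < k \<Longrightarrow> dC k (unrot k s i) (unrot k s j) = dC k i j"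
  by (simp add: unrot_def dC_rot)

lemma cycE_mem: "3 \<le> k \<Longrightarrow> i < k \<Longrightarrow> j < k \<Longrightarrow> {i, j} \<in> cyc_E k \<longleftrightarrow> dC k i j = 1"
proof -
  assume k: "3 \<le> k" and i: "i < k" and j: "j < k"
  show ?thesis
  proof
    assume "{i, j} \<in> cyc_E k"
    then consider t where "1 \<le> t" "t \<le> k - 1" "{i, j} = {t - 1, t}" | "{i, j} = {k - 1, 0}"
      by (auto simp: cyc_E_def)
    thus "dC k i j = 1"
    proof cases
      case 1 thus ?thesis using k by (auto simp: doubleton_eq_iff dC_def)
    next
      case 2 thus ?thesis using k by (auto simp: doubleton_eq_iff dC_def)
    qed
  next
    assume "dC k i j = 1"
    hence "ca k i j" using dC_1 k i j by simp
    then consider "j = i + 1" | "i = j + 1" | "i = 0" "j = k - 1" | "j = 0" "i = k - 1" by (auto simp: ca_def)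
    thus "{i, j} \<in> cyc_E k"
    proof cases
      case 1 thus ?thesis using j unfolding cyc_E_def by (intro UnI1) (auto intro!: exI[of _ j])
    next
      case 2 thus ?thesis using i unfolding cyc_E_def by (intro UnI1) (auto intro!: exI[of _ i])
    next
      case 3 thus ?thesis by (auto simp: cyc_E_def)
    next
      case 4 thus ?thesis by (auto simp: cyc_E_def)
    qed
  qed
qed

lemma cycE_form: "3 \<le> k \<Longrightarrow> f \<in> cyc_E k \<Longrightarrow> \<exists>i j. f = {i, j} \<and> i < k \<and> j < k"
proof -
  assume k: "3 \<le> k" and f: "f \<in> cyc_E k"
  then consider t where "1 \<le> t" "t \<le> k - 1" "f = {t - 1, t}" | "f = {k - 1, 0}"
    by (auto simp: cyc_E_def)
  thus ?thesis
  proof cases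
    case 1 thus ?thesis using k by (intro exI[of _ "t - 1"] exI[of _ t]) auto
  next
    case 2 thus ?thesis using k by (intro exI[of _ "k - 1"] exI[of _ 0]) auto
  qed
qed

lemma N_mem: "3 \<le> k \<Longrightarrow> f \<in> nonedges (cyc_V k) (cyc_E k) \<longleftrightarrow> (\<exists>i j. f = {i, j} \<and> i < k \<and> j < k \<and> 2 \<le> dC k i j)"
proof -
  assume k: "3 \<le> k"
  show ?thesis
  proof
    assume "f \<in> nonedges (cyc_V k) (cyc_E k)"
    then obtain i j where ij: "f = {i, j}" "i < k" "j < k" "i \<noteq> j" "{i, j} \<notin> cyc_E k"
      by (auto simp: nonedges_def cyc_V_def)
    have "dC k i j \<noteq> 0" "dC k i j \<noteq> 1" using ij dC_0 cycE_mem k by auto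
    thus "\<exists>i j. f = {i, j} \<and> i < k \<and> j < k \<and> 2 \<le> dC k i j" using ij by (intro exI[of _ i] exI[of _ j]) auto
  next
    assume "\<exists>i j. f = {i, j} \<and> i < k \<and> j < k \<and> 2 \<le> dC k i j"
    then obtain i j where ij: "f = {i, j}" "i < k" "j < k" "2 \<le> dC k i j" by blast
    have "i \<noteq> j" using ij dC_0 by fastforce
    moreover have "{i, j} \<notin> cyc_E k" using ij cycE_mem k by auto
    ultimately show "f \<in> nonedges (cyc_V k) (cyc_E k)" using ij by (auto simp: nonedges_def cyc_V_def)
  qed
qed

lemma D_mem: "3 \<le> k \<Longrightarrow> f \<in> {f \<in> nonedges (cyc_V k) (cyc_E k). \<exists>i j. i \<in> cyc_V k \<and> j \<in> cyc_V k \<and> f = {i, j} \<and> dC k i j = 2}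
   \<longleftrightarrow> (\<exists>i j. f = {i, j} \<and> i < k \<and> j < k \<and> dC k i j = 2)"
proof -
  assume k: "3 \<le> k"
  show ?thesis
  proof
    assume "(\<exists>i j. f = {i, j} \<and> i < k \<and> j < k \<and> dC k i j = 2)"
    then obtain i j where ij: "f = {i, j}" "i < k" "j < k" "dC k i j = 2" by blast
    hence "f \<in> nonedges (cyc_V k) (cyc_E k)" using N_mem[OF k] by fastforce
    thus "f \<in> {f \<in> nonedges (cyc_V k) (cyc_E k). \<exists>i j. i \<in> cyc_V k \<and> j \<in> cyc_V k \<and> f = {i, j} \<and> dC k i j = 2}"
      using ij by (auto simp: cyc_V_def)
  qed (auto simp: cyc_V_def)
qed


lemma rot_rot: "rot k (rot k a i) t = rot k a (i + t)"
  unfolding rot_def by (simp add: mod_add_right_eq add.commute add.left_commute)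

lemma rot_inj: "i < k \<Longrightarrow> j < k \<Longrightarrow> rot k a i = rot k a j \<Longrightarrow> i = j"
  by (metis unrot_rot)

lemma rot_0: "a < k \<Longrightarrow> rot k a 0 = a" by (simp add: rot_def)

lemma cyc_edge: "5 \<le> k \<Longrightarrow> t + 1 < k \<Longrightarrow> {rot k a t, rot k a (t + 1)} \<in> cyc_E k"
proof -
  assume k: "5 \<le> k" and t: "t + 1 < k"
  have "dC k (rot k a t) (rot k a (t + 1)) = dC k t (t + 1)" using t by (intro dC_rot) auto
  also have "\<dots> = 1" using k t by (simp add: dC_def)
  finally show ?thesis using k t by (subst cycE_mem) (auto intro: rot_lt)
qed

lemma dC_two: "5 \<le> k \<Longrightarrow> t + 2 < k \<Longrightarrow> dC k (rot k a t) (rot k a (t + 2)) = 2"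
proof -
  assume k: "5 \<le> k" and t: "t + 2 < k"
  have "dC k (rot k a t) (rot k a (t + 2)) = dC k t (t + 2)" using t by (intro dC_rot) auto
  also have "\<dots> = 2" using k t by (simp add: dC_def)
  finally show ?thesis .
qed

lemma arc:
  assumes k: "5 \<le> k" and ch: "chordal (cyc_V k) H" and EH: "cyc_E k \<subseteq> H"
  shows "2 \<le> L \<Longrightarrow> L < k \<Longrightarrow> {rot k a 0, rot k a L} \<in> H \<Longrightarrow> \<exists>t. t + 2 \<le> L \<and> {rot k a t, rot k a (t + 2)} \<in> H"
proof (induction L arbitrary: a rule: less_induct)
  case (less L)
  show ?case
  proof (cases "L = 2")
    case True thus ?thesis using less.prems by (intro exI[of _ 0]) (simp add: numeral_2_eq_2)
  next
    case False
    hence L3: "3 \<le> L" using less.prems by simp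
    define cs where "cs = map (rot k a) [0..<L + 1]"
    have len: "length cs = L + 1" by (simp add: cs_def)
    have nth: "cs ! i = rot k a i" if "i < L + 1" for i using that unfolding cs_def by (subst nth_map) (simp_all del: upt_Suc)
    have cyc: "is_graph_cycle (cyc_V k) H cs"
      unfolding is_graph_cycle_def
    proof (intro conjI allI impI)
      have "inj_on (rot k a) {0..<L + 1}"
      proof (rule inj_onI)
        fix x y assume "x \<in> {0..<L + 1}" "y \<in> {0..<L + 1}" "rot k a x = rot k a y"
        thus "x = y" using less.prems by (intro rot_inj[of x k y a]) auto
      qed
      thus "distinct cs" unfolding cs_def by (simp add: distinct_map del: upt_Suc)
      show "set cs \<subseteq> cyc_V k" using k by (auto simp: cs_def cyc_V_def rot_lt)
      show "3 \<le> length cs" using L3 len by simp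
      fix i assume i: "i < length cs"
      show "{cs ! i, cs ! ((i + 1) mod length cs)} \<in> H"
      proof (cases "i = L")
        case True
        hence "(i + 1) mod length cs = 0" using len by simp
        thus ?thesis using True less.prems nth len by (simp add: insert_commute)
      next
        case False
        hence "i + 1 < L + 1" using i len by simp
        hence "(i + 1) mod length cs = i + 1" using len by simp
        moreover have "{rot k a i, rot k a (i + 1)} \<in> cyc_E k" using cyc_edge k \<open>i + 1 < L + 1\<close> less.prems by simp
        ultimately show ?thesis using EH nth i len \<open>i + 1 < L + 1\<close> by auto
      qed
    qed
    have "has_chord H cs" using ch cyc L3 len unfolding chordal_def by simp
    then obtain i0 j0 where ij: "i0 < L + 1" "j0 < L + 1" "i0 \<noteq> j0" "j0 \<noteq> (i0 + 1) mod (L + 1)"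
      "i0 \<noteq> (j0 + 1) mod (L + 1)" "{rot k a i0, rot k a j0} \<in> H"
      unfolding has_chord_def len using nth by auto
    obtain i1 j1 where ij1: "i1 < j1" "j1 < L + 1" "j1 \<noteq> (i1 + 1) mod (L + 1)"
      "i1 \<noteq> (j1 + 1) mod (L + 1)" "{rot k a i1, rot k a j1} \<in> H"
    proof (cases "i0 < j0")
      case True thus ?thesis using that ij by blast
    next
      case False thus ?thesis using that[of j0 i0] ij by (simp add: insert_commute)
    qed
    have "(i1 + 1) mod (L + 1) = i1 + 1" using ij1 by simp
    hence g2: "i1 + 2 \<le> j1" using ij1 by auto
    have "\<not> (i1 = 0 \<and> j1 = L)" using ij1 by auto
    hence ltL: "j1 - i1 < L" using ij1 by auto
    define a' where "a' = rot k a i1"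
    have e0: "{rot k a' 0, rot k a' (j1 - i1)} \<in> H"
      using ij1 g2 by (simp add: a'_def rot_rot)
    have "\<exists>t. t + 2 \<le> j1 - i1 \<and> {rot k a' t, rot k a' (t + 2)} \<in> H"
      by (rule less.IH[OF ltL _ _ e0]) (use g2 less.prems ltL in auto)
    then obtain t where t: "t + 2 \<le> j1 - i1" "{rot k a' t, rot k a' (t + 2)} \<in> H" by blast
    show ?thesis using t ltL ij1 by (intro exI[of _ "i1 + t"]) (auto simp: a'_def rot_rot add.assoc)
  qed
qed


lemma arcs_distinct:
  fixes k i0 x j0 y :: nat
  assumes "5 \<le> k" "i0 \<le> x" "x + 2 \<le> j0" "j0 < k" "j0 \<le> y" "y + 2 \<le> k + i0"
  shows "{x, x + 2} \<noteq> {y mod k, (y + 2) mod k}"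
proof -
  consider "y + 2 < k" | "y < k" "k \<le> y + 2" | "k \<le> y" by linarith
  thus ?thesis
  proof cases
    case 1 thus ?thesis using assms by (auto simp: doubleton_eq_iff)
  next
    case 2
    hence "(y + 2) mod k = y + 2 - k" using assms by (simp add: mod_if)
    thus ?thesis using 2 assms by (auto simp: doubleton_eq_iff)
  next
    case 3
    hence "y mod k = y - k" "(y + 2) mod k = y + 2 - k" using assms by (simp_all add: mod_if)
    thus ?thesis using 3 assms by (auto simp: doubleton_eq_iff)
  qed
qed

lemma two_ears:
  assumes k: "5 \<le> k" and ch: "chordal (cyc_V k) H" and EH: "cyc_E k \<subseteq> H"
  shows "\<exists>e1 e2. e1 \<noteq> e2 \<and> e1 \<in> H \<and> e2 \<in> H \<and>
     (\<exists>i j. e1 = {i, j} \<and> i < k \<and> j < k \<and> dC k i j = 2) \<and> (\<exists>i j. e2 = {i, j} \<and> i < k \<and> j < k \<and> dC k i j = 2)"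
proof -
  define cs where "cs = [0..<k]"
  have cyc: "is_graph_cycle (cyc_V k) H cs"
    unfolding is_graph_cycle_def
  proof (intro conjI allI impI)
    show "distinct cs" "set cs \<subseteq> cyc_V k" "3 \<le> length cs" using k by (auto simp: cs_def cyc_V_def)
    fix i assume i: "i < length cs"
    show "{cs ! i, cs ! ((i + 1) mod length cs)} \<in> H"
    proof (cases "i = k - 1")
      case True
      hence "(i + 1) mod length cs = 0" using k by (simp add: cs_def)
      moreover have "{k - 1, 0} \<in> cyc_E k" by (simp add: cyc_E_def)
      ultimately show ?thesis using True EH k by (auto simp: cs_def)
    next
      case False
      hence "i + 1 < k" using i by (simp add: cs_def)
      hence "{rot k 0 i, rot k 0 (i + 1)} \<in> cyc_E k" using cyc_edge k by simp
      thus ?thesis using \<open>i + 1 < k\<close> EH by (auto simp: cs_def rot_def)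
    qed
  qed
  have "has_chord H cs" using ch cyc k unfolding chordal_def by (simp add: cs_def)
  then obtain i0 j0 where ij: "i0 < k" "j0 < k" "i0 \<noteq> j0" "j0 \<noteq> (i0 + 1) mod k"
      "i0 \<noteq> (j0 + 1) mod k" "{i0, j0} \<in> H"
    unfolding has_chord_def cs_def by auto
  obtain i1 j1 where ij1: "i1 < j1" "j1 < k" "j1 \<noteq> (i1 + 1) mod k"
      "i1 \<noteq> (j1 + 1) mod k" "{i1, j1} \<in> H"
  proof (cases "i0 < j0")
    case True thus ?thesis using that ij by blast
  next
    case False thus ?thesis using that[of j0 i0] ij by (simp add: insert_commute)
  qed
  have "(i1 + 1) mod k = i1 + 1" using ij1 by simp
  hence g2: "i1 + 2 \<le> j1" using ij1 by auto
  have "\<not> (i1 = 0 \<and> j1 = k - 1)" using ij1 k by auto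
  hence lk: "j1 - i1 \<le> k - 2" using ij1 by auto
  have h1: "{rot k i1 0, rot k i1 (j1 - i1)} \<in> H" using ij1 g2 by (simp add: rot_def)
  have "\<exists>t. t + 2 \<le> j1 - i1 \<and> {rot k i1 t, rot k i1 (t + 2)} \<in> H"
    by (rule arc[OF k ch EH _ _ h1]) (use g2 ij1 in auto)
  then obtain t1 where t1: "t1 + 2 \<le> j1 - i1" "{rot k i1 t1, rot k i1 (t1 + 2)} \<in> H" by blast
  have "rot k j1 (k - (j1 - i1)) = (k + i1) mod k" using ij1 g2 by (simp add: rot_def)
  hence h2: "{rot k j1 0, rot k j1 (k - (j1 - i1))} \<in> H" using ij1 by (simp add: rot_def insert_commute)
  have "\<exists>t. t + 2 \<le> k - (j1 - i1) \<and> {rot k j1 t, rot k j1 (t + 2)} \<in> H"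
    by (rule arc[OF k ch EH _ _ h2]) (use g2 lk ij1 in auto)
  then obtain t2 where t2: "t2 + 2 \<le> k - (j1 - i1)" "{rot k j1 t2, rot k j1 (t2 + 2)} \<in> H" by blast
  define e1 where "e1 = {rot k i1 t1, rot k i1 (t1 + 2)}"
  define e2 where "e2 = {rot k j1 t2, rot k j1 (t2 + 2)}"
  have e1x: "e1 = {i1 + t1, i1 + t1 + 2}" using t1 ij1 by (simp add: e1_def rot_def add.commute)
  have e2y: "e2 = {(j1 + t2) mod k, (j1 + t2 + 2) mod k}" by (simp add: e2_def rot_def add.commute add.left_commute)
  have ne: "e1 \<noteq> e2" unfolding e1x e2y
    by (rule arcs_distinct[of k i1 "i1 + t1" j1 "j1 + t2"]) (use k t1 t2 ij1 g2 in auto)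
  have d1: "dC k (rot k i1 t1) (rot k i1 (t1 + 2)) = 2" using t1 ij1 k by (intro dC_two) auto
  have d2: "dC k (rot k j1 t2) (rot k j1 (t2 + 2)) = 2" using t2 g2 k by (intro dC_two) auto
  have m: "e1 \<in> H" "e2 \<in> H" using t1 t2 by (simp_all add: e1_def e2_def)
  have x1: "\<exists>i j. e1 = {i, j} \<and> i < k \<and> j < k \<and> dC k i j = 2"
    using d1 k by (intro exI[of _ "rot k i1 t1"] exI[of _ "rot k i1 (t1 + 2)"]) (simp add: e1_def rot_lt)
  have x2: "\<exists>i j. e2 = {i, j} \<and> i < k \<and> j < k \<and> dC k i j = 2"
    using d2 k by (intro exI[of _ "rot k j1 t2"] exI[of _ "rot k j1 (t2 + 2)"]) (simp add: e2_def rot_lt)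
  show ?thesis
    apply (rule exI[of _ e1])
    apply (rule exI[of _ e2])
    using ne m x1 x2 by (intro conjI)
qed



definition dfa :: "nat \<Rightarrow> nat \<Rightarrow> bool \<Rightarrow> nat \<Rightarrow> nat \<Rightarrow> bool" where
  "dfa k L e u v \<longleftrightarrow> (u = 1 \<and> 3 \<le> v \<and> v \<le> L + 1) \<or> (u = L + 1 \<and> (L + 3 \<le> v \<and> v < k \<or> v = 0 \<or> v = 1))
     \<or> (e \<and> u = 0 \<and> v = L)"

definition DF :: "nat \<Rightarrow> nat \<Rightarrow> bool \<Rightarrow> nat \<Rightarrow> nat \<Rightarrow> bool" where
  "DF k L e u v \<longleftrightarrow> ca k u v \<or> dfa k L e u v \<or> dfa k L e v u"

definition sg :: "nat \<Rightarrow> nat \<Rightarrow> nat \<Rightarrow> nat" where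
  "sg k L t = (if t = 1 then 0 else if t = L + 1 then 1 else if t = 0 then 2 else if t \<le> L then 3 * k - t else 2 * k - t)"

lemma lowN:
  assumes k: "5 \<le> k" "2 \<le> L" "L + 3 \<le> k" and uv: "u < k" "v < k"
    and d: "DF k L e v u" and s: "sg k L u < sg k L v"
  shows "(v = 0 \<and> (u = 1 \<or> u = L + 1)) \<or> (2 \<le> v \<and> v \<le> L \<and> (u = v + 1 \<or> u = 1 \<or> (e \<and> v = L \<and> u = 0)))
    \<or> (L + 2 \<le> v \<and> (u = L + 1 \<or> (v + 1 < k \<and> u = v + 1) \<or> (v = k - 1 \<and> u = 0))) \<or> (v = L + 1 \<and> u = 1)"
  using d s k uv unfolding DF_def ca_def dfa_def sg_def
  by (auto split: if_splits)


lemma low0: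
  assumes k: "5 \<le> k" "2 \<le> L" "L + 3 \<le> k" and uv: "u < k" "v < k"
    and d: "DF k L e v u" and s: "sg k L u < sg k L v"
  shows "v = 0 \<Longrightarrow> u = 1 \<or> u = L + 1"
  using d s k uv unfolding DF_def ca_def dfa_def sg_def
  by (auto split: if_splits)

lemma low1:
  assumes k: "5 \<le> k" "2 \<le> L" "L + 3 \<le> k" and uv: "u < k" "v < k"
    and d: "DF k L e v u" and s: "sg k L u < sg k L v"
  shows "2 \<le> v \<Longrightarrow> v \<le> L \<Longrightarrow> u = v + 1 \<or> u = 1 \<or> (e \<and> v = L \<and> u = 0)"
  using d s k uv unfolding DF_def ca_def dfa_def sg_def
  by (auto split: if_splits)

lemma low2:
  assumes k: "5 \<le> k" "2 \<le> L" "L + 3 \<le> k" and uv: "u < k" "v < k"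
    and d: "DF k L e v u" and s: "sg k L u < sg k L v"
  shows "L + 2 \<le> v \<Longrightarrow> u = L + 1 \<or> (v + 1 < k \<and> u = v + 1) \<or> (v = k - 1 \<and> u = 0)"
  using d s k uv unfolding DF_def ca_def dfa_def sg_def
  by (auto split: if_splits)

lemma low3:
  assumes k: "5 \<le> k" "2 \<le> L" "L + 3 \<le> k" and uv: "u < k" "v < k"
    and d: "DF k L e v u" and s: "sg k L u < sg k L v"
  shows "v = L + 1 \<Longrightarrow> u = 1"
  using d s k uv unfolding DF_def ca_def dfa_def sg_def
  by (auto split: if_splits)

lemma low4:
  assumes k: "5 \<le> k" "2 \<le> L" "L + 3 \<le> k" and uv: "u < k" "v < k"
    and d: "DF k L e v u" and s: "sg k L u < sg k L v"
  shows "v \<noteq> 1"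
  using d s k uv unfolding DF_def ca_def dfa_def sg_def
  by (auto split: if_splits)

lemma DF_simpl:
  assumes k: "5 \<le> k" "2 \<le> L" "L + 3 \<le> k" and uv: "u1 < k" "u2 < k" "v < k" "u1 \<noteq> u2"
    and d: "DF k L e v u1" "DF k L e v u2" and s: "sg k L u1 < sg k L v" "sg k L u2 < sg k L v"
  shows "DF k L e u1 u2"
proof -
  consider "v = 0" | "2 \<le> v \<and> v \<le> L" | "L + 2 \<le> v" | "v = L + 1" | "v = 1" by linarith
  thus ?thesis
  proof cases
    case 1
    hence "u1 = 1 \<or> u1 = L + 1" "u2 = 1 \<or> u2 = L + 1"
      using low0[OF k uv(1) uv(3) d(1) s(1)] low0[OF k uv(2) uv(3) d(2) s(2)] by auto
    hence "(u1 = 1 \<and> u2 = L + 1) \<or> (u1 = L + 1 \<and> u2 = 1)" using uv(4) by auto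
    thus ?thesis using k by (auto simp: DF_def dfa_def)
  next
    case 2
    hence "u1 = v + 1 \<or> u1 = 1 \<or> (e \<and> v = L \<and> u1 = 0)" "u2 = v + 1 \<or> u2 = 1 \<or> (e \<and> v = L \<and> u2 = 0)"
      using low1[OF k uv(1) uv(3) d(1) s(1)] low1[OF k uv(2) uv(3) d(2) s(2)] by auto
    thus ?thesis using uv(4) 2 k
      by (elim disjE conjE; simp add: DF_def dfa_def ca_def)
  next
    case 3
    hence "u1 = L + 1 \<or> (v + 1 < k \<and> u1 = v + 1) \<or> (v = k - 1 \<and> u1 = 0)"
      "u2 = L + 1 \<or> (v + 1 < k \<and> u2 = v + 1) \<or> (v = k - 1 \<and> u2 = 0)"
      using low2[OF k uv(1) uv(3) d(1) s(1)] low2[OF k uv(2) uv(3) d(2) s(2)] by auto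
    thus ?thesis using uv 3 k
      by (elim disjE conjE; simp add: DF_def dfa_def ca_def)
  next
    case 4
    hence "u1 = 1" "u2 = 1"
      using low3[OF k uv(1) uv(3) d(1) s(1)] low3[OF k uv(2) uv(3) d(2) s(2)] by auto
    thus ?thesis using uv(4) by simp
  next
    case 5
    thus ?thesis using low4[OF k uv(1) uv(3) d(1) s(1)] by simp
  qed
qed

lemma sg_inj: "5 \<le> k \<Longrightarrow> 2 \<le> L \<Longrightarrow> L + 3 \<le> k \<Longrightarrow> inj_on (sg k L) {0..<k}"
  unfolding inj_on_def sg_def by (auto split: if_splits)

lemma DF_sym: "DF k L e u v \<Longrightarrow> DF k L e v u"
  unfolding DF_def ca_def by auto

lemma DF_irr: "2 \<le> L \<Longrightarrow> 5 \<le> k \<Longrightarrow> \<not> DF k L e u u"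
  unfolding DF_def ca_def dfa_def by auto

lemma dC_2: "5 \<le> k \<Longrightarrow> i < k \<Longrightarrow> j < k \<Longrightarrow> dC k i j = 2 \<longleftrightarrow> (j = i + 2 \<or> i = j + 2 \<or> j + k = i + 2 \<or> i + k = j + 2)"
  unfolding dC_def min_def by (cases "i < j"; cases "j - i \<le> k - j + i"; cases "i - j \<le> k - i + j"; simp; linarith)

definition d2 :: "nat \<Rightarrow> nat \<Rightarrow> nat \<Rightarrow> bool" where
  "d2 k i j \<longleftrightarrow> (j = i + 2 \<or> i = j + 2 \<or> j + k = i + 2 \<or> i + k = j + 2)"

lemma dfa_D:
  assumes k: "5 \<le> k" "2 \<le> L" "L + 3 \<le> k" and e3: "e \<longrightarrow> 3 \<le> L" and uv: "u < k" "v < k"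
    and d: "dfa k L e u v" and c: "d2 k u v"
  shows "{u, v} = {1, 3} \<or> {u, v} = {L + 1, (L + 3) mod k}"
proof -
  have m: "(L + 3) mod k = (if L + 3 = k then 0 else L + 3)" using k by auto
  consider "u = 1" "3 \<le> v" "v \<le> L + 1" | "u = L + 1" "L + 3 \<le> v" | "u = L + 1" "v = 0" | "u = L + 1" "v = 1"
    | "e" "u = 0" "v = L"
    using d unfolding dfa_def by blast
  thus ?thesis
  proof cases
    case 1 
    hence "v = 3" using c k uv unfolding d2_def by linarith
    thus ?thesis using 1 by simp
  next
    case 2
    hence "v = L + 3" using c k uv unfolding d2_def by linarith
    thus ?thesis using 2 uv by simp
  next
    case 3
    hence "L + 3 = k" using c k uv unfolding d2_def by linarith
    thus ?thesis using 3 by simp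
  next
    case 4
    hence "L = 2" using c k uv unfolding d2_def by linarith
    thus ?thesis using 4 by auto
  next
    case 5 thus ?thesis using c k uv e3 unfolding d2_def by linarith
  qed
qed

lemma ca_d2: "5 \<le> k \<Longrightarrow> u < k \<Longrightarrow> v < k \<Longrightarrow> ca k u v \<Longrightarrow> d2 k u v \<Longrightarrow> False"
  unfolding ca_def d2_def by linarith

lemma d2_sym: "d2 k u v \<Longrightarrow> d2 k v u" unfolding d2_def by auto

lemma DF_D1:
  assumes k: "5 \<le> k" "2 \<le> L" "L + 3 \<le> k" and e3: "e \<longrightarrow> 3 \<le> L" and uv: "t1 < k" "t2 < k"
    and d: "DF k L e t1 t2" and c: "dC k t1 t2 = 2"
  shows "{t1, t2} = {1, 3} \<or> {t1, t2} = {L + 1, (L + 3) mod k}"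
proof -
  have c2: "d2 k t1 t2" using c dC_2[OF k(1) uv] by (simp add: d2_def)
  from d consider "ca k t1 t2" | "dfa k L e t1 t2" | "dfa k L e t2 t1" unfolding DF_def by blast
  thus ?thesis
  proof cases
    case 1 thus ?thesis using ca_d2 k uv c2 by blast
  next
    case 2 show ?thesis using dfa_D[OF k e3 uv 2 c2] .
  next
    case 3 thus ?thesis using dfa_D[OF k e3 uv(2) uv(1) 3 d2_sym[OF c2]] by (simp add: insert_commute)
  qed
qed

lemma DF_D2:
  assumes k: "5 \<le> k" "2 \<le> L" "L + 3 \<le> k"
  shows "DF k L e 1 3" "dC k 1 3 = 2" "DF k L e (L + 1) ((L + 3) mod k)" "dC k (L + 1) ((L + 3) mod k) = 2"
proof -
  have m: "(L + 3) mod k = (if L + 3 = k then 0 else L + 3)" using k by auto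
  show "DF k L e 1 3" using k by (simp add: DF_def dfa_def)
  show "dC k 1 3 = 2" using k by (simp add: dC_def)
  show "DF k L e (L + 1) ((L + 3) mod k)" using k unfolding m by (simp add: DF_def dfa_def)
  have "(L + 3) mod k < k" using k by simp
  hence "d2 k (L + 1) ((L + 3) mod k)" using k unfolding m d2_def by (auto split: if_splits)
  thus "dC k (L + 1) ((L + 3) mod k) = 2" using dC_2[OF k(1), of "L + 1" "(L + 3) mod k"] k
    by (simp add: d2_def)
qed

lemma D12_ne: "5 \<le> k \<Longrightarrow> 2 \<le> L \<Longrightarrow> L + 3 \<le> k \<Longrightarrow> {1, 3} \<noteq> {L + 1, (L + 3) mod (k::nat)}"
proof -
  assume k: "5 \<le> k" "2 \<le> L" "L + 3 \<le> k"
  have m: "(L + 3) mod k = (if L + 3 = k then 0 else L + 3)" using k by auto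
  show ?thesis unfolding m using k by (auto simp: doubleton_eq_iff split: if_splits)
qed




definition Bg :: "nat \<Rightarrow> (nat \<Rightarrow> nat \<Rightarrow> bool) \<Rightarrow> nat set set" where
  "Bg k R = {{u, v} | u v. u \<in> cyc_V k \<and> v \<in> cyc_V k \<and> R u v}"

definition gr :: "nat \<Rightarrow> nat \<Rightarrow> (nat \<Rightarrow> nat \<Rightarrow> bool) \<Rightarrow> nat set set" where
  "gr k s R = (`) (rot k s) ` Bg k R"

definition pt :: "nat \<Rightarrow> nat set set \<Rightarrow> nat set \<Rightarrow> real" where
  "pt k H f = (if f \<in> H \<and> f \<in> nonedges (cyc_V k) (cyc_E k) then 1 else 0)"

lemma rot_inj_on: "inj_on (rot k s) (cyc_V k)"
  by (auto simp: inj_on_def cyc_V_def dest: rot_inj)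

lemma rot_image: "0 < k \<Longrightarrow> rot k s ` cyc_V k = cyc_V k"
proof
  assume k: "0 < k"
  show "rot k s ` cyc_V k \<subseteq> cyc_V k" using k by (auto simp: cyc_V_def rot_lt)
  show "cyc_V k \<subseteq> rot k s ` cyc_V k"
  proof
    fix u assume "u \<in> cyc_V k"
    hence "u = rot k s (unrot k s u)" "unrot k s u \<in> cyc_V k" using k by (auto simp: cyc_V_def rot_unrot unrot_lt)
    thus "u \<in> rot k s ` cyc_V k" by blast
  qed
qed

lemma chordal_gr:
  fixes \<sigma> :: "nat \<Rightarrow> nat"
  assumes k: "0 < k" and symR: "\<And>u v. R u v \<Longrightarrow> R v u"
    and inj: "inj_on \<sigma> (cyc_V k)"
    and simpl: "\<And>v u1 u2. v \<in> cyc_V k \<Longrightarrow> u1 \<in> cyc_V k \<Longrightarrow> u2 \<in> cyc_V k \<Longrightarrow> u1 \<noteq> u2 \<Longrightarrow> R v u1 \<Longrightarrow> R v u2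
       \<Longrightarrow> \<sigma> u1 < \<sigma> v \<Longrightarrow> \<sigma> u2 < \<sigma> v \<Longrightarrow> R u1 u2"
  shows "chordal (cyc_V k) (gr k s R)"
proof -
  have "chordal (cyc_V k) (Bg k R)" unfolding Bg_def by (rule peo_chordal[OF symR inj simpl]) auto
  moreover have "\<forall>e\<in>Bg k R. e \<subseteq> cyc_V k" by (auto simp: Bg_def)
  ultimately have "chordal (rot k s ` cyc_V k) ((`) (rot k s) ` Bg k R)"
    using rot_inj_on by (intro chordal_iso) auto
  thus ?thesis using rot_image[OF k] by (simp add: gr_def)
qed

lemma gr_form: "f \<in> gr k s R \<Longrightarrow> \<exists>a b. a < k \<and> b < k \<and> R a b \<and> f = {rot k s a, rot k s b}"
  by (auto simp: gr_def Bg_def cyc_V_def)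

lemma gr_intro: "a < k \<Longrightarrow> b < k \<Longrightarrow> R a b \<Longrightarrow> {rot k s a, rot k s b} \<in> gr k s R"
  unfolding gr_def Bg_def cyc_V_def by (rule image_eqI[of _ _ "{a, b}"]) auto

lemma gr_mem:
  assumes k: "0 < k" and symR: "\<And>u v. R u v \<Longrightarrow> R v u" and uv: "u < k" "v < k"
  shows "{u, v} \<in> gr k s R \<longleftrightarrow> R (unrot k s u) (unrot k s v)"
proof
  assume "{u, v} \<in> gr k s R"
  then obtain a b where ab: "a < k" "b < k" "R a b" "{u, v} = {rot k s a, rot k s b}" using gr_form by blast
  hence "(u = rot k s a \<and> v = rot k s b) \<or> (u = rot k s b \<and> v = rot k s a)" by (auto simp: doubleton_eq_iff)
  thus "R (unrot k s u) (unrot k s v)" using ab symR by (auto simp: unrot_rot)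
next
  assume "R (unrot k s u) (unrot k s v)"
  hence "{rot k s (unrot k s u), rot k s (unrot k s v)} \<in> gr k s R" using k by (intro gr_intro) (auto simp: unrot_lt)
  thus "{u, v} \<in> gr k s R" using uv by (simp add: rot_unrot)
qed

lemma pt_X:
  assumes k: "3 \<le> k" and ch: "chordal (cyc_V k) H" and EH: "cyc_E k \<subseteq> H"
    and fm: "\<forall>f\<in>H. \<exists>u v. f = {u, v} \<and> u < k \<and> v < k \<and> u \<noteq> v"
  shows "pt k H \<in> X_set (cyc_V k) (cyc_E k)"
proof -
  have "cyc_E k \<union> {f \<in> nonedges (cyc_V k) (cyc_E k). pt k H f = 1} = H"
  proof
    show "cyc_E k \<union> {f \<in> nonedges (cyc_V k) (cyc_E k). pt k H f = 1} \<subseteq> H"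
      using EH by (auto simp: pt_def split: if_splits)
    show "H \<subseteq> cyc_E k \<union> {f \<in> nonedges (cyc_V k) (cyc_E k). pt k H f = 1}"
    proof
      fix f assume f: "f \<in> H"
      show "f \<in> cyc_E k \<union> {f \<in> nonedges (cyc_V k) (cyc_E k). pt k H f = 1}"
      proof (cases "f \<in> cyc_E k")
        case False
        obtain u v where "f = {u, v}" "u < k" "v < k" "u \<noteq> v" using fm f by blast
        hence "f \<in> nonedges (cyc_V k) (cyc_E k)" using False by (auto simp: nonedges_def cyc_V_def)
        thus ?thesis using f by (simp add: pt_def)
      qed simp
    qed
  qed
  thus ?thesis using ch unfolding X_set_def by (simp add: pt_def)
qed


definition Nset :: "nat \<Rightarrow> nat set set" where
  "Nset k = nonedges (cyc_V k) (cyc_E k)"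

definition Dset :: "nat \<Rightarrow> nat set set" where
  "Dset k = {f \<in> nonedges (cyc_V k) (cyc_E k). \<exists>i j. i \<in> cyc_V k \<and> j \<in> cyc_V k \<and> f = {i, j} \<and> dC k i j = 2}"

lemma Dset_mem: "3 \<le> k \<Longrightarrow> f \<in> Dset k \<longleftrightarrow> (\<exists>i j. f = {i, j} \<and> i < k \<and> j < k \<and> dC k i j = 2)"
  unfolding Dset_def by (rule D_mem)

lemma Dset_N: "Dset k \<subseteq> Nset k" by (auto simp: Dset_def Nset_def)

lemma Nset_fin: "finite (Nset k)"
proof -
  have "Nset k \<subseteq> Pow {0..<k}" by (auto simp: Nset_def nonedges_def cyc_V_def)
  thus ?thesis by (rule finite_subset) simp
qed

lemma Dset_fin: "finite (Dset k)" using Nset_fin Dset_N by (rule finite_subset[rotated])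

lemma sum_pt_D: "(\<Sum>f\<in>Dset k. pt k H f) = real (card (Dset k \<inter> H))"
proof -
  have "(\<Sum>f\<in>Dset k. pt k H f) = (\<Sum>f\<in>Dset k. if f \<in> H then 1 else 0)"
    using Dset_N by (intro sum.cong) (auto simp: pt_def Nset_def)
  also have "\<dots> = (\<Sum>f\<in>{f \<in> Dset k. f \<in> H}. 1)" by (rule sum.inter_filter[symmetric]) (rule Dset_fin)
  also have "{f \<in> Dset k. f \<in> H} = Dset k \<inter> H" by auto
  finally show ?thesis by simp
qed

lemma sum_pt_N: "(\<Sum>f\<in>Nset k. a f * pt k H f) = (\<Sum>f\<in>Nset k \<inter> H. a f)"
proof -
  have "(\<Sum>f\<in>Nset k. a f * pt k H f) = (\<Sum>f\<in>Nset k. if f \<in> H then a f else 0)"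
    by (intro sum.cong) (auto simp: pt_def Nset_def)
  also have "\<dots> = (\<Sum>f\<in>{f \<in> Nset k. f \<in> H}. a f)" using Nset_fin by (simp add: sum.inter_filter)
  also have "{f \<in> Nset k. f \<in> H} = Nset k \<inter> H" by auto
  finally show ?thesis .
qed

lemma DF_chordal:
  assumes k: "5 \<le> k" "2 \<le> L" "L + 3 \<le> k"
  shows "chordal (cyc_V k) (gr k s (DF k L e))"
proof (rule chordal_gr[where \<sigma> = "sg k L"])
  show "0 < k" using k by simp
  show "\<And>u v. DF k L e u v \<Longrightarrow> DF k L e v u" by (rule DF_sym)
  show "inj_on (sg k L) (cyc_V k)" using sg_inj[OF k] by (simp add: cyc_V_def)
  fix v u1 u2 assume "v \<in> cyc_V k" "u1 \<in> cyc_V k" "u2 \<in> cyc_V k" "u1 \<noteq> u2" "DF k L e v u1" "DF k L e v u2"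
    "sg k L u1 < sg k L v" "sg k L u2 < sg k L v"
  thus "DF k L e u1 u2" using DF_simpl[OF k] by (auto simp: cyc_V_def)
qed

lemma DF_E:
  assumes k: "5 \<le> k" "2 \<le> L" "L + 3 \<le> k"
  shows "cyc_E k \<subseteq> gr k s (DF k L e)"
proof
  fix f assume f: "f \<in> cyc_E k"
  have k3: "3 \<le> k" using k by simp
  obtain i j where ij: "f = {i, j}" "i < k" "j < k" using cycE_form[OF k3 f] by blast
  have "dC k i j = 1" using cycE_mem ij f k by auto
  hence "dC k (unrot k s i) (unrot k s j) = 1" using ij by (simp add: dC_unrot)
  hence "ca k (unrot k s i) (unrot k s j)" using dC_1 k by (simp add: unrot_lt)
  hence "DF k L e (unrot k s i) (unrot k s j)" by (simp add: DF_def)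
  thus "f \<in> gr k s (DF k L e)" using gr_mem[of k "DF k L e"] ij k DF_sym by auto
qed

lemma DF_fm:
  assumes k: "5 \<le> k" "2 \<le> L" "L + 3 \<le> k"
  shows "\<forall>f\<in>gr k s (DF k L e). \<exists>u v. f = {u, v} \<and> u < k \<and> v < k \<and> u \<noteq> v"
proof
  fix f assume "f \<in> gr k s (DF k L e)"
  then obtain a b where ab: "a < k" "b < k" "DF k L e a b" "f = {rot k s a, rot k s b}" using gr_form by blast
  have "a \<noteq> b" using ab DF_irr k by blast
  hence "rot k s a \<noteq> rot k s b" using ab rot_inj by blast
  moreover have "rot k s a < k" "rot k s b < k" using k by (simp_all add: rot_lt[of k])
  ultimately show "\<exists>u v. f = {u, v} \<and> u < k \<and> v < k \<and> u \<noteq> v" using ab by blast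
qed

lemma DF_X:
  assumes k: "5 \<le> k" "2 \<le> L" "L + 3 \<le> k"
  shows "pt k (gr k s (DF k L e)) \<in> X_set (cyc_V k) (cyc_E k)"
  using pt_X DF_chordal[OF k] DF_E[OF k] DF_fm[OF k] k by simp

lemma DF_Dset:
  assumes k: "5 \<le> k" "2 \<le> L" "L + 3 \<le> k" and e3: "e \<longrightarrow> 3 \<le> L"
  shows "Dset k \<inter> gr k s (DF k L e) = {{rot k s 1, rot k s 3}, {rot k s (L + 1), rot k s ((L + 3) mod k)}}"
proof
  show "Dset k \<inter> gr k s (DF k L e) \<subseteq> {{rot k s 1, rot k s 3}, {rot k s (L + 1), rot k s ((L + 3) mod k)}}"
  proof
    fix f assume f: "f \<in> Dset k \<inter> gr k s (DF k L e)"
    then obtain i j where ij: "f = {i, j}" "i < k" "j < k" "dC k i j = 2" using Dset_mem k by auto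
    have "DF k L e (unrot k s i) (unrot k s j)" using f ij gr_mem[of k "DF k L e"] k DF_sym by auto
    moreover have "dC k (unrot k s i) (unrot k s j) = 2" using ij by (simp add: dC_unrot)
    ultimately have c: "{unrot k s i, unrot k s j} = {1, 3} \<or> {unrot k s i, unrot k s j} = {L + 1, (L + 3) mod k}"
      using DF_D1[OF k e3] ij k by (simp add: unrot_lt)
    have fe: "f = rot k s ` {unrot k s i, unrot k s j}" using ij by (simp add: rot_unrot)
    from c show "f \<in> {{rot k s 1, rot k s 3}, {rot k s (L + 1), rot k s ((L + 3) mod k)}}"
    proof
      assume "{unrot k s i, unrot k s j} = {1, 3}"
      hence "f = rot k s ` {1, 3}" using fe by simp
      thus ?thesis by simp
    next
      assume "{unrot k s i, unrot k s j} = {L + 1, (L + 3) mod k}"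
      hence "f = rot k s ` {L + 1, (L + 3) mod k}" using fe by simp
      thus ?thesis by simp
    qed
  qed
  have m: "(L + 3) mod k < k" using k by simp
  have g: "{rot k s 1, rot k s 3} \<in> gr k s (DF k L e)" "{rot k s (L + 1), rot k s ((L + 3) mod k)} \<in> gr k s (DF k L e)"
    using DF_D2[OF k] k m by (auto intro!: gr_intro)
  have "dC k (rot k s 1) (rot k s 3) = 2" "dC k (rot k s (L + 1)) (rot k s ((L + 3) mod k)) = 2"
    using DF_D2[OF k] k m by (simp_all add: dC_rot)
  moreover have "rot k s 1 < k" "rot k s 3 < k" "rot k s (L + 1) < k" "rot k s ((L + 3) mod k) < k"
    using k by (simp_all add: rot_lt[of k])
  moreover have k3: "3 \<le> k" using k by simp
  ultimately have "{rot k s 1, rot k s 3} \<in> Dset k" "{rot k s (L + 1), rot k s ((L + 3) mod k)} \<in> Dset k"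
    unfolding Dset_mem[OF k3] by blast+
  thus "{{rot k s 1, rot k s 3}, {rot k s (L + 1), rot k s ((L + 3) mod k)}} \<subseteq> Dset k \<inter> gr k s (DF k L e)"
    using g by auto
qed

lemma DF_ne:
  assumes k: "5 \<le> k" "2 \<le> L" "L + 3 \<le> k"
  shows "{rot k s 1, rot k s 3} \<noteq> {rot k s (L + 1), rot k s ((L + 3) mod k)}"
proof -
  have "{1, 3} \<noteq> {L + 1, (L + 3) mod k}" by (rule D12_ne[OF k])
  moreover have "{1, 3} \<subseteq> cyc_V k" "{L + 1, (L + 3) mod k} \<subseteq> cyc_V k" using k by (auto simp: cyc_V_def)
  ultimately have "rot k s ` {1, 3} \<noteq> rot k s ` {L + 1, (L + 3) mod k}"
    using inj_on_image_eq_iff[OF rot_inj_on[of k s]] by blast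
  thus ?thesis by simp
qed

lemma DF_card:
  assumes k: "5 \<le> k" "2 \<le> L" "L + 3 \<le> k" and e3: "e \<longrightarrow> 3 \<le> L"
  shows "(\<Sum>f\<in>Dset k. pt k (gr k s (DF k L e)) f) = 2"
  unfolding sum_pt_D DF_Dset[OF k e3] using DF_ne[OF k] by simp


lemma rot_shift: "rot k (s + c) t = rot k s (t + c)"
  by (simp add: rot_def add.commute add.left_commute)

lemma rot_addk: "rot k s (t + k) = rot k s t"
  by (simp add: rot_def add.commute add.left_commute)

lemma rot_mod: "rot k s (t mod k) = rot k s t"
  by (simp add: rot_def mod_add_left_eq)

lemma rot_saddk: "rot k (s + k) t = rot k s t"
  by (simp add: rot_def add.assoc[symmetric])

lemma DF_True: "DF k L True u v \<longleftrightarrow> DF k L False u v \<or> (u = 0 \<and> v = L) \<or> (u = L \<and> v = 0)"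
  by (auto simp: DF_def dfa_def)

lemma gr_insert:
  assumes "L < k"
  shows "gr k s (DF k L True) = insert {rot k s 0, rot k s L} (gr k s (DF k L False))"
proof
  show "gr k s (DF k L True) \<subseteq> insert {rot k s 0, rot k s L} (gr k s (DF k L False))"
  proof
    fix f assume "f \<in> gr k s (DF k L True)"
    then obtain a b where ab: "a < k" "b < k" "DF k L True a b" "f = {rot k s a, rot k s b}" using gr_form by blast
    show "f \<in> insert {rot k s 0, rot k s L} (gr k s (DF k L False))"
      using ab gr_intro[of a k b "DF k L False" s] by (auto simp: DF_True insert_commute)
  qed
  show "insert {rot k s 0, rot k s L} (gr k s (DF k L False)) \<subseteq> gr k s (DF k L True)"
  proof
    fix f assume "f \<in> insert {rot k s 0, rot k s L} (gr k s (DF k L False))"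
    then consider "f = {rot k s 0, rot k s L}" | "f \<in> gr k s (DF k L False)" by blast
    thus "f \<in> gr k s (DF k L True)"
    proof cases
      case 1 thus ?thesis using assms by (auto intro!: gr_intro simp: DF_True)
    next
      case 2
      then obtain a b where ab: "a < k" "b < k" "DF k L False a b" "f = {rot k s a, rot k s b}" using gr_form by blast
      thus ?thesis by (auto intro!: gr_intro simp: DF_True)
    qed
  qed
qed

lemma gr_notin:
  assumes k: "5 \<le> k" "3 \<le> L" "L + 3 \<le> k"
  shows "{rot k s 0, rot k s L} \<notin> gr k s (DF k L False)"
proof
  assume "{rot k s 0, rot k s L} \<in> gr k s (DF k L False)"
  hence "DF k L False (unrot k s (rot k s 0)) (unrot k s (rot k s L))"
    using gr_mem[of k "DF k L False"] DF_sym k by (simp add: rot_lt)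
  hence "DF k L False 0 L" using k by (simp add: unrot_rot)
  thus False using k by (auto simp: DF_def dfa_def ca_def)
qed

definition al :: "nat \<Rightarrow> (nat set \<Rightarrow> real) \<Rightarrow> nat \<Rightarrow> real" where
  "al k a u = a {rot k u (k - 1), rot k u 1}"

lemma al_per: "al k a (u + k) = al k a u"
  by (simp add: al_def rot_saddk)

lemma E2_sum:
  assumes k: "5 \<le> k" "2 \<le> L" "L + 3 \<le> k" and z: "\<forall>f\<in>Nset k - Dset k. a f = 0"
  shows "(\<Sum>f\<in>Nset k. a f * pt k (gr k s (DF k L False)) f) = al k a (s + 2) + al k a (s + L + 2)"
proof -
  define H where "H = gr k s (DF k L False)"
  have "(\<Sum>f\<in>Nset k. a f * pt k H f) = (\<Sum>f\<in>Nset k \<inter> H. a f)" by (rule sum_pt_N)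
  also have "Nset k \<inter> H = (Dset k \<inter> H) \<union> ((Nset k - Dset k) \<inter> H)" using Dset_N by auto
  also have "(\<Sum>f\<in>(Dset k \<inter> H) \<union> ((Nset k - Dset k) \<inter> H). a f) = (\<Sum>f\<in>Dset k \<inter> H. a f) + (\<Sum>f\<in>(Nset k - Dset k) \<inter> H. a f)"
    using Nset_fin Dset_fin by (intro sum.union_disjoint) auto
  also have "(\<Sum>f\<in>(Nset k - Dset k) \<inter> H. a f) = 0" using z by (intro sum.neutral) auto
  also have "Dset k \<inter> H = {{rot k s 1, rot k s 3}, {rot k s (L + 1), rot k s ((L + 3) mod k)}}"
    unfolding H_def by (rule DF_Dset[OF k]) simp
  also have "(\<Sum>f\<in>{{rot k s 1, rot k s 3}, {rot k s (L + 1), rot k s ((L + 3) mod k)}}. a f)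
     = a {rot k s 1, rot k s 3} + a {rot k s (L + 1), rot k s ((L + 3) mod k)}"
    using DF_ne[OF k] by simp
  also have "a {rot k s 1, rot k s 3} = al k a (s + 2)"
  proof -
    have e: "k - 1 + 2 = 1 + k" using k by simp
    have "rot k (s + 2) (k - 1) = rot k s (k - 1 + 2)" by (rule rot_shift)
    also have "\<dots> = rot k s 1" unfolding e by (rule rot_addk)
    finally have "rot k (s + 2) (k - 1) = rot k s 1" .
    moreover have "rot k (s + 2) 1 = rot k s 3" using rot_shift[of k s 2 1] by (simp add: numeral_3_eq_3)
    ultimately show ?thesis by (simp add: al_def)
  qed
  also have "a {rot k s (L + 1), rot k s ((L + 3) mod k)} = al k a (s + L + 2)"
  proof -
    have e: "k - 1 + (L + 2) = L + 1 + k" using k by simp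
    have "rot k (s + L + 2) (k - 1) = rot k (s + (L + 2)) (k - 1)" by (simp add: add.assoc)
    also have "\<dots> = rot k s (k - 1 + (L + 2))" by (rule rot_shift)
    finally have "rot k (s + L + 2) (k - 1) = rot k s (L + 1 + k)" unfolding e .
    also have "rot k s (L + 1 + k) = rot k s (L + 1)" by (rule rot_addk)
    finally have "rot k (s + L + 2) (k - 1) = rot k s (L + 1)" .
    moreover have "rot k (s + L + 2) 1 = rot k s ((L + 3) mod k)"
    proof -
      have "rot k (s + L + 2) 1 = rot k (s + (L + 2)) 1" by (simp add: add.assoc)
      also have "\<dots> = rot k s (1 + (L + 2))" by (rule rot_shift)
      also have "\<dots> = rot k s (L + 3)" by (simp add: add.commute numeral_3_eq_3)
      finally show ?thesis by (simp add: rot_mod)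
    qed
    ultimately show ?thesis by (simp add: al_def)
  qed
  finally show ?thesis by (simp add: H_def)
qed




lemma E1:
  assumes k: "5 \<le> k" and fN: "f \<in> Nset k" and fD: "f \<notin> Dset k"
    and eq: "\<forall>x\<in>X_set (cyc_V k) (cyc_E k). (\<Sum>f\<in>Dset k. x f) = 2 \<longrightarrow> (\<Sum>f\<in>Nset k. a f * x f) = b"
  shows "a f = 0"
proof -
  have k3: "3 \<le> k" using k by simp
  obtain i0 j0 where ij0: "f = {i0, j0}" "i0 < k" "j0 < k" "2 \<le> dC k i0 j0"
    using fN N_mem[OF k3] by (auto simp: Nset_def)
  have n2: "dC k i0 j0 \<noteq> 2" using fD ij0 Dset_mem[OF k3] by auto
  have "i0 \<noteq> j0" using ij0 dC_0 by fastforce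
  then obtain i j where ij: "f = {i, j}" "i < j" "j < k" "3 \<le> dC k i j"
  proof (cases "i0 < j0")
    case True thus ?thesis using that[of i0 j0] ij0 n2 by auto
  next
    case False thus ?thesis using that[of j0 i0] ij0 n2 \<open>i0 \<noteq> j0\<close> by (auto simp: insert_commute dC_sym)
  qed
  define L where "L = j - i"
  have L: "3 \<le> L" "L + 3 \<le> k" using ij by (auto simp: L_def dC_def min_def split: if_splits)
  have k2: "5 \<le> k" "2 \<le> L" "L + 3 \<le> k" using k L by auto
  have fr: "f = {rot k i 0, rot k i L}" using ij by (simp add: rot_def L_def)
  define H0 where "H0 = gr k i (DF k L False)"
  define H1 where "H1 = gr k i (DF k L True)"
  have H1: "H1 = insert f H0" unfolding H1_def H0_def fr using L by (intro gr_insert) simp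
  have fH0: "f \<notin> H0" unfolding H0_def fr by (rule gr_notin) (use k L in auto)
  have b0: "(\<Sum>g\<in>Nset k. a g * pt k H0 g) = b"
    using eq DF_X[OF k2, of i False] DF_card[OF k2, of False i] by (simp add: H0_def)
  have b1: "(\<Sum>g\<in>Nset k. a g * pt k H1 g) = b"
    using eq DF_X[OF k2, of i True] DF_card[OF k2, of True i] L by (simp add: H1_def)
  have "Nset k \<inter> H1 = insert f (Nset k \<inter> H0)" using H1 fN by auto
  hence "(\<Sum>g\<in>Nset k \<inter> H1. a g) = a f + (\<Sum>g\<in>Nset k \<inter> H0. a g)"
    using fH0 Nset_fin by simp
  thus ?thesis using b0 b1 by (simp add: sum_pt_N)
qed


lemma al_step:
  assumes k: "5 \<le> k" and z: "\<forall>f\<in>Nset k - Dset k. a f = 0"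
    and eq: "\<forall>x\<in>X_set (cyc_V k) (cyc_E k). (\<Sum>f\<in>Dset k. x f) = 2 \<longrightarrow> (\<Sum>f\<in>Nset k. a f * x f) = b"
  shows "al k a u = al k a (u + 1)"
proof -
  have S: "al k a (s + 2) + al k a (s + L + 2) = b" if "2 \<le> L" "L + 3 \<le> k" for s L
  proof -
    have k2: "5 \<le> k" "2 \<le> L" "L + 3 \<le> k" using k that by auto
    have "(\<Sum>f\<in>Nset k. a f * pt k (gr k s (DF k L False)) f) = b"
      using eq DF_X[OF k2, of s False] DF_card[OF k2, of False s] by simp
    thus ?thesis using E2_sum[OF k2 z] by simp
  qed
  show ?thesis
  proof (cases "k = 5")
    case True
    have "al k a (u + 1 + 2) + al k a (u + 1 + 2 + 2) = b" using S[of 2 "u + 1"] True by simp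
    moreover have "u + 1 + 2 = u + 3" "u + 1 + 2 + 2 = u + k" using True by auto
    ultimately have 1: "al k a (u + 3) + al k a u = b" by (simp only: al_per)
    have "al k a (u + 4 + 2) + al k a (u + 4 + 2 + 2) = b" using S[of 2 "u + 4"] True by simp
    moreover have "u + 4 + 2 = (u + 1) + k" "u + 4 + 2 + 2 = (u + 3) + k" using True by auto
    ultimately have 2: "al k a (u + 1) + al k a (u + 3) = b" by (simp only: al_per)
    show ?thesis using 1 2 by simp
  next
    case False
    hence k6: "6 \<le> k" using k by simp
    have "al k a (u + (k - 2) + 2) + al k a (u + (k - 2) + 3 + 2) = b" using S[of 3 "u + (k - 2)"] k6 by simp
    moreover have "u + (k - 2) + 2 = u + k" "u + (k - 2) + 3 + 2 = (u + 3) + k" using k6 by auto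
    ultimately have 1: "al k a u + al k a (u + 3) = b" by (simp only: al_per)
    have "al k a (u + (k - 1) + 2) + al k a (u + (k - 1) + 2 + 2) = b" using S[of 2 "u + (k - 1)"] k6 by simp
    moreover have "u + (k - 1) + 2 = (u + 1) + k" "u + (k - 1) + 2 + 2 = (u + 3) + k" using k6 by auto
    ultimately have 2: "al k a (u + 1) + al k a (u + 3) = b" by (simp only: al_per)
    show ?thesis using 1 2 by simp
  qed
qed

lemma D_al:
  assumes k: "5 \<le> k" and f: "f \<in> Dset k"
  shows "\<exists>u. f = {rot k u (k - 1), rot k u 1}"
proof -
  have k3: "3 \<le> k" using k by simp
  obtain i j where ij: "f = {i, j}" "i < k" "j < k" "dC k i j = 2" using f Dset_mem[OF k3] by auto
  have mi: "rot k (i + 1) (k - 1) = i" using ij k by (simp add: rot_def)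
  have mj: "rot k (j + 1) (k - 1) = j" using ij k by (simp add: rot_def)
  have d: "j = i + 2 \<or> i = j + 2 \<or> j + k = i + 2 \<or> i + k = j + 2" using ij dC_2 k by auto
  show ?thesis
  proof (cases "j = i + 2 \<or> j + k = i + 2")
    case True
    hence "(i + 2) mod k = j" using ij by (metis mod_add_self2 mod_less)
    hence "rot k (i + 1) 1 = j" by (simp add: rot_def add.commute)
    thus ?thesis using mi ij by (intro exI[of _ "i + 1"]) simp
  next
    case False
    hence "i = j + 2 \<or> i + k = j + 2" using d by auto
    hence "(j + 2) mod k = i" using ij by (metis mod_add_self2 mod_less)
    hence "rot k (j + 1) 1 = i" by (simp add: rot_def add.commute)
    thus ?thesis using mj ij by (intro exI[of _ "j + 1"]) (simp add: insert_commute)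
  qed
qed

lemma face_H:
  assumes k: "5 \<le> k"
    and eq: "\<forall>x\<in>X_set (cyc_V k) (cyc_E k). (\<Sum>f\<in>Dset k. x f) = 2 \<longrightarrow> (\<Sum>f\<in>Nset k. a f * x f) = b"
    and a0: "a {k - 1, 1} = 0"
  shows "(\<forall>f\<in>Nset k. a f = 0) \<and> b = 0"
proof -
  have z: "\<forall>f\<in>Nset k - Dset k. a f = 0" using E1[OF k _ _ eq] by blast
  have st: "al k a u = al k a (u + 1)" for u by (rule al_step[OF k z eq])
  have al0: "al k a u = al k a 0" for u
    by (induction u) (use st in auto)
  have "al k a 0 = a {k - 1, 1}" using k by (simp add: al_def rot_def)
  hence alz: "al k a u = 0" for u using al0 a0 by simp
  have aN: "\<forall>f\<in>Nset k. a f = 0"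
  proof
    fix f assume fN: "f \<in> Nset k"
    show "a f = 0"
    proof (cases "f \<in> Dset k")
      case True
      then obtain u where "f = {rot k u (k - 1), rot k u 1}" using D_al k by blast
      thus ?thesis using alz[of u] by (simp add: al_def)
    next
      case False thus ?thesis using z fN by blast
    qed
  qed
  have k2: "5 \<le> k" "2 \<le> (2::nat)" "2 + 3 \<le> k" using k by auto
  have "(\<Sum>f\<in>Nset k. a f * pt k (gr k 0 (DF k 2 False)) f) = b"
    using eq DF_X[OF k2, of 0 False] DF_card[OF k2, of False 0] by simp
  hence "b = 0" using aN by simp
  thus ?thesis using aN by simp
qed




definition Kg :: "nat \<Rightarrow> nat set \<Rightarrow> nat set set" where
  "Kg k g = Bg k (\<lambda>u v. u \<noteq> v \<and> {u, v} \<noteq> g)"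

lemma Kg_chordal:
  assumes p: "p < k" and gp: "\<forall>u v. {u, v} = g \<longrightarrow> u = p \<or> v = p"
  shows "chordal (cyc_V k) (Kg k g)"
  unfolding Kg_def Bg_def
proof (rule peo_chordal[where \<sigma> = "\<lambda>t. if t = p then k else t"])
  show "\<And>u v. u \<noteq> v \<and> {u, v} \<noteq> g \<Longrightarrow> v \<noteq> u \<and> {v, u} \<noteq> g" by (auto simp: insert_commute)
  show "inj_on (\<lambda>t. if t = p then k else t) (cyc_V k)" by (auto simp: inj_on_def cyc_V_def)
  fix v u1 u2 assume h: "v \<in> cyc_V k" "u1 \<in> cyc_V k" "u2 \<in> cyc_V k" "u1 \<noteq> u2"
    "v \<noteq> u1 \<and> {v, u1} \<noteq> g" "v \<noteq> u2 \<and> {v, u2} \<noteq> g"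
    "(if u1 = p then k else u1) < (if v = p then k else v)" "(if u2 = p then k else u2) < (if v = p then k else v)"
  have "u1 \<noteq> p" "u2 \<noteq> p" using h by (auto simp: cyc_V_def split: if_splits)
  thus "u1 \<noteq> u2 \<and> {u1, u2} \<noteq> g" using h gp by blast
qed

lemma Kg_X:
  assumes k: "5 \<le> k" and g: "g = {} \<or> g \<in> Nset k"
  shows "pt k (Kg k g) \<in> X_set (cyc_V k) (cyc_E k)"
proof (rule pt_X)
  show "3 \<le> k" using k by simp
  have "\<exists>p. p < k \<and> (\<forall>u v. {u, v} = g \<longrightarrow> u = p \<or> v = p)"
  proof (cases "g = {}")
    case True thus ?thesis using k by (intro exI[of _ 0]) auto
  next
    case False
    hence gN: "g \<in> nonedges (cyc_V k) (cyc_E k)" using g by (simp add: Nset_def)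
    have "\<exists>i j. g = {i, j} \<and> i < k \<and> j < k \<and> 2 \<le> dC k i j" using gN N_mem[of k g] k by simp
    then obtain p q where "g = {p, q}" "p < k" by blast
    thus ?thesis by (intro exI[of _ p]) (auto simp: doubleton_eq_iff)
  qed
  thus "chordal (cyc_V k) (Kg k g)" using Kg_chordal by blast
  show "cyc_E k \<subseteq> Kg k g"
  proof
    fix f assume f: "f \<in> cyc_E k"
    have k3: "3 \<le> k" using k by simp
    obtain i j where ij: "f = {i, j}" "i < k" "j < k" using cycE_form[OF k3 f] by blast
    have "dC k i j = 1" using cycE_mem ij f k by auto
    hence "i \<noteq> j" using dC_0 ij by fastforce
    moreover have "f \<noteq> g" using g f by (auto simp: Nset_def nonedges_def cyc_E_def)
    ultimately show "f \<in> Kg k g" using ij by (auto simp: Kg_def Bg_def cyc_V_def)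
  qed
  show "\<forall>f\<in>Kg k g. \<exists>u v. f = {u, v} \<and> u < k \<and> v < k \<and> u \<noteq> v"
    by (auto simp: Kg_def Bg_def cyc_V_def)
qed

lemma N_Kg: "Nset k \<inter> Kg k g = Nset k - {g}"
  by (auto simp: Nset_def nonedges_def Kg_def Bg_def)

lemma full_H:
  assumes k: "5 \<le> k" and eq: "\<forall>x\<in>X_set (cyc_V k) (cyc_E k). (\<Sum>f\<in>Nset k. a f * x f) = b"
  shows "(\<forall>f\<in>Nset k. a f = 0) \<and> b = 0"
proof -
  have "(\<Sum>f\<in>Nset k. a f * pt k (Kg k {}) f) = b" using eq Kg_X[OF k, of "{}"] by blast
  hence b0: "(\<Sum>f\<in>Nset k - {{}}. a f) = b" by (simp only: sum_pt_N N_Kg)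
  have "{} \<notin> Nset k" by (auto simp: Nset_def nonedges_def)
  hence b1: "(\<Sum>f\<in>Nset k. a f) = b" using b0 by simp
  have az: "a g = 0" if g: "g \<in> Nset k" for g
  proof -
    have "(\<Sum>f\<in>Nset k. a f * pt k (Kg k g) f) = b" using eq Kg_X[OF k, of g] g by blast
    hence "(\<Sum>f\<in>Nset k - {g}. a f) = b" by (simp only: sum_pt_N N_Kg)
    moreover have "(\<Sum>f\<in>Nset k. a f) = a g + (\<Sum>f\<in>Nset k - {g}. a f)" using g Nset_fin by (simp add: sum.remove)
    ultimately show ?thesis using b1 by simp
  qed
  hence "b = 0" using b1 by simp
  thus ?thesis using az by blast
qed

lemma valid_X:
  assumes k: "5 \<le> k" and x: "x \<in> X_set (cyc_V k) (cyc_E k)"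
  shows "2 \<le> (\<Sum>f\<in>Dset k. x f)"
proof -
  have k3: "3 \<le> k" using k by simp
  define H where "H = cyc_E k \<union> {f \<in> nonedges (cyc_V k) (cyc_E k). x f = 1}"
  have ch: "chordal (cyc_V k) H" using x by (simp add: X_set_def H_def)
  have EH: "cyc_E k \<subseteq> H" by (simp add: H_def)
  obtain e1 e2 where e0: "e1 \<noteq> e2 \<and> e1 \<in> H \<and> e2 \<in> H \<and>
    (\<exists>i j. e1 = {i, j} \<and> i < k \<and> j < k \<and> dC k i j = 2) \<and> (\<exists>i j. e2 = {i, j} \<and> i < k \<and> j < k \<and> dC k i j = 2)"
    using two_ears[OF k ch EH] by (elim exE) (rule that)
  note e = conjunct1[OF e0] conjunct1[OF conjunct2[OF e0]] conjunct1[OF conjunct2[OF conjunct2[OF e0]]]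
    conjunct1[OF conjunct2[OF conjunct2[OF conjunct2[OF e0]]]] conjunct2[OF conjunct2[OF conjunct2[OF conjunct2[OF e0]]]]
  have inD: "e \<in> Dset k \<and> x e = 1" if eH: "e \<in> H" and ex: "\<exists>i j. e = {i, j} \<and> i < k \<and> j < k \<and> dC k i j = 2" for e
  proof -
    obtain i j where ij: "e = {i, j}" "i < k" "j < k" "dC k i j = 2" using ex by blast
    have "e \<notin> cyc_E k" using cycE_mem[OF k3 ij(2,3)] ij by simp
    hence "x e = 1" using eH by (simp add: H_def)
    moreover have "e \<in> Dset k" using Dset_mem[OF k3] ij by blast
    ultimately show ?thesis by simp
  qed
  have d1: "e1 \<in> Dset k" "x e1 = 1" using inD e by auto
  have d2: "e2 \<in> Dset k" "x e2 = 1" using inD e by auto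
  have nn: "\<forall>f\<in>Dset k. 0 \<le> x f"
  proof
    fix f assume "f \<in> Dset k"
    hence "f \<in> nonedges (cyc_V k) (cyc_E k)" using Dset_N by (auto simp: Nset_def)
    hence "x f \<in> {0, 1}" using x by (simp add: X_set_def)
    thus "0 \<le> x f" by auto
  qed
  have "(\<Sum>f\<in>{e1, e2}. x f) \<le> (\<Sum>f\<in>Dset k. x f)"
    using d1 d2 nn Dset_fin by (intro sum_mono2) auto
  thus ?thesis using d1 d2 e(1) by simp
qed

lemma valid_P:
  assumes k: "5 \<le> k" and y: "y \<in> conv (X_set (cyc_V k) (cyc_E k))"
  shows "2 \<le> (\<Sum>f\<in>Dset k. y f)"
proof -
  obtain T c where T: "finite T" "T \<subseteq> X_set (cyc_V k) (cyc_E k)" "\<forall>x\<in>T. 0 \<le> c x" "sum c T = 1"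
    "y = (\<lambda>f. \<Sum>x\<in>T. c x * x f)" using y by (auto simp: conv_def)
  have "(\<Sum>f\<in>Dset k. y f) = (\<Sum>x\<in>T. c x * (\<Sum>f\<in>Dset k. x f))"
    unfolding T(5) by (simp add: sum.swap[of _ "Dset k"] sum_distrib_left)
  also have "\<dots> \<ge> (\<Sum>x\<in>T. c x * 2)"
    using T valid_X[OF k] by (intro sum_mono mult_left_mono) auto
  also have "(\<Sum>x\<in>T. c x * 2) = 2" using T(4) by (simp add: sum_distrib_right[symmetric])
  finally show ?thesis by simp
qed

lemma X_P: "x \<in> S \<Longrightarrow> x \<in> conv S"
  unfolding conv_def by (intro CollectI exI[of _ "{x}"] exI[of _ "\<lambda>_. 1"]) auto

lemma P_van:
  assumes "y \<in> conv (X_set (cyc_V k) (cyc_E k))" "f \<notin> Nset k"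
  shows "y f = 0"
proof -
  obtain T c where T: "T \<subseteq> X_set (cyc_V k) (cyc_E k)" "y = (\<lambda>f. \<Sum>x\<in>T. c x * x f)"
    using assms(1) by (auto simp: conv_def)
  have "\<forall>x\<in>T. x f = 0" using T(1) assms(2) by (auto simp: X_set_def Nset_def)
  thus ?thesis using T(2) by (simp add: sum.neutral)
qed

lemma adim_eq:
  assumes "\<exists>T\<subseteq>S. aff_indep T \<and> card T = n" and "\<forall>T\<subseteq>S. aff_indep T \<longrightarrow> card T \<le> n"
  shows "adim S = int n - 1"
proof -
  have "(GREATEST n. \<exists>T\<subseteq>S. aff_indep T \<and> card T = n) = n"
    using assms by (intro Greatest_equality) auto
  thus ?thesis by (simp add: adim_def)
qed




lemma g0_D: "5 \<le> k \<Longrightarrow> {k - 1, 1} \<in> Dset k"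
proof -
  assume k: "5 \<le> k"
  have "dC k (k - 1) 1 = 2" using k by (simp add: dC_def)
  thus ?thesis using k Dset_mem[of k "{k - 1, 1}"] by auto
qed

theorem proposition4:
  fixes k :: nat
  assumes "k \<ge> 5"
  defines "D \<equiv> {f \<in> nonedges (cyc_V k) (cyc_E k).
                  \<exists>i j. i \<in> cyc_V k \<and> j \<in> cyc_V k \<and> f = {i, j} \<and> dC k i j = 2}"
      and "P \<equiv> conv (X_set (cyc_V k) (cyc_E k))"
  shows "(\<forall>x \<in> P. (\<Sum>f\<in>D. x f) \<ge> 2)
         \<and> adim (P \<inter> {x. (\<Sum>f\<in>D. x f) = 2}) = adim P - 1"
proof -
  have k: "5 \<le> k" using assms(1) by simp
  have DD: "D = Dset k" by (simp add: D_def Dset_def)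
  define X where "X = X_set (cyc_V k) (cyc_E k)"
  define N where "N = Nset k"
  have fN: "finite N" by (simp add: N_def Nset_fin)
  have PX: "P = conv X" by (simp add: P_def X_def)
  have valid: "\<forall>x\<in>P. 2 \<le> (\<Sum>f\<in>D. x f)" using valid_P[OF k] by (simp add: PX X_def DD)
  have van: "\<forall>y\<in>P. \<forall>f. f \<notin> N \<longrightarrow> y f = 0" using P_van by (simp add: PX X_def N_def)
  have vanX: "\<forall>y\<in>X. \<forall>f. f \<notin> N \<longrightarrow> y f = 0" by (auto simp: X_def X_set_def N_def Nset_def)
  have XP: "X \<subseteq> P" unfolding PX using X_P by blast
  have ubP: "card T \<le> card N + 1" if "T \<subseteq> P" "aff_indep T" for T
    using aff_bound[OF fN _ that(2)] van that(1) by blast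
  have "\<exists>T\<subseteq>X. aff_indep T \<and> card N + 1 \<le> card T + card ({} :: nat set set)"
  proof (rule aff_lower[OF fN _ _ vanX])
    fix a b assume "\<forall>x\<in>X. (\<Sum>f\<in>N. a f * x f) = b"
    hence "\<forall>x\<in>X_set (cyc_V k) (cyc_E k). (\<Sum>f\<in>Nset k. a f * x f) = b" by (simp add: X_def N_def)
    from full_H[OF k this] show "(\<forall>f\<in>N. a f = 0) \<and> b = 0" by (simp add: N_def)
  qed auto
  then obtain T0 where T0: "T0 \<subseteq> X" "aff_indep T0" "card N + 1 \<le> card T0" by auto
  have "card T0 = card N + 1" using T0 XP ubP[of T0] by auto
  hence adimP: "adim P = int (card N + 1) - 1"
    using T0 XP ubP by (intro adim_eq) auto
  define F where "F = P \<inter> {x. (\<Sum>f\<in>D. x f) = 2}"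
  define g0 where "g0 = {k - 1, 1::nat}"
  have g0D: "g0 \<in> Dset k" using g0_D[OF k] by (simp add: g0_def)
  have ubF: "card T \<le> card N" if "T \<subseteq> F" "aff_indep T" for T
  proof (rule aff_bound2[OF fN _ that(2) Dset_fin _ g0D])
    show "\<forall>y\<in>T. \<forall>f. f \<notin> N \<longrightarrow> y f = 0" using van that(1) by (auto simp: F_def)
    show "Dset k \<subseteq> N" using Dset_N by (simp add: N_def)
    show "\<forall>y\<in>T. (\<Sum>f\<in>Dset k. y f) = 2" using that(1) by (auto simp: F_def DD)
  qed
  define S where "S = {x \<in> X. (\<Sum>f\<in>D. x f) = 2}"
  have SF: "S \<subseteq> F" using XP by (auto simp: S_def F_def)
  have "\<exists>T\<subseteq>S. aff_indep T \<and> card N + 1 \<le> card T + card {g0}"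
  proof (rule aff_lower[OF fN _ _ ])
    show "{g0} \<subseteq> N" using g0D Dset_N by (auto simp: N_def)
    show "\<forall>y\<in>S. \<forall>f. f \<notin> N \<longrightarrow> y f = 0" using vanX by (auto simp: S_def)
    fix a b assume h: "\<forall>x\<in>S. (\<Sum>f\<in>N. a f * x f) = b" "\<forall>f\<in>{g0}. a f = 0"
    have "\<forall>x\<in>X_set (cyc_V k) (cyc_E k). (\<Sum>f\<in>Dset k. x f) = 2 \<longrightarrow> (\<Sum>f\<in>Nset k. a f * x f) = b"
      using h(1) by (auto simp: S_def X_def DD N_def)
    moreover have "a {k - 1, 1} = 0" using h(2) by (simp add: g0_def)
    ultimately have "(\<forall>f\<in>Nset k. a f = 0) \<and> b = 0" by (rule face_H[OF k])
    thus "(\<forall>f\<in>N. a f = 0) \<and> b = 0" by (simp add: N_def)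
  qed simp
  then obtain T1 where T1: "T1 \<subseteq> S" "aff_indep T1" "card N \<le> card T1" by auto
  have "card T1 = card N" using T1 SF ubF[of T1] by auto
  hence adimF: "adim F = int (card N) - 1"
    using T1 SF ubF by (intro adim_eq) auto
  show ?thesis using valid adimP adimF by (simp add: F_def)
qed


end
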